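(* Let $\nu>0$, $0<K<\nu^2/2$, and let $(\Phi_m)$ satisfy the standing assumptions in the context. Let $W\in\mathcal{C}_K$. Then $\mathcal{P}(\mathcal{T}(W))\ge\mathcal{P}(W)$, and equality holds if and only if $W=\mathcal{T}(W)$. Moreover, if $W=\mathcal{T}(W)$, then $W$ satisfies $$c^2W=\sum_{m=1}^\infty A_m\big(-\Phi_m'(\nu m-A_mW)\big)+\eta$$ with $c=\mu(W)^{-1/2}$ and $\eta=\sum_{m=1}^\infty m\,\Phi_m'(\nu m)$ (a convergent series).
   Context: $A_m f(\xi):=\int_{-m/2}^{m/2} f(\xi+s)\,ds$. $\Psi_m(r):=\Phi_m(\nu m-r)-\Phi_m(\nu m)+\Phi_m'(\nu m)r$ for $r\in[0,\nu m)$. $\mathcal{P}(W):=\int_{\mathbb{R}}\sum_{m\ge1}\Psi_m(A_mW(s))\,ds$, $\partial\mathcal{P}(W):=\sum_{m\ge1}A_m\Psi_m'(A_mW)$, $\mu(W):=\|W\|_2/\|\partial\mathcal{P}(W)\|_2$, $\mathcal{T}(W):=\mu(W)\,\partial\mathcal{P}(W)$. $\mathcal{C}$ is the $\mathsf{L}^2(\mathbb{R})$-closure of $\{W\in C_c^\infty(\mathbb{R}): W(x)=W(-x)\ge0,\ \dot W(x)=-\dot W(-x)\le0\ \forall x\ge0\}$; $\mathcal{C}_K:=\{W\in\mathcal{C}:\frac12\|W\|_2^2=K\}$. Standing assumptions: for every $m$, $\Phi_m:[0,\infty)\to[0,\infty)$, $\Phi_m\in C^4([0,\infty))$, $\Phi_m\ge0,\Phi_m'\le0,\Phi_m''\ge0,\Phi_m'''\le0,\Phi_m^{(4)}\ge0$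 (strict for $m=1$, $s>0$); and for a fixed $\gamma\in(5/2,3)$ the series $\sum_m\Phi_m'(\nu m-\sqrt{2Km})m$, $\sum_m\Phi_m''(\nu m-\sqrt{2Km})m^2$, $\sum_m\Phi_m''(\nu m)m^\gamma$, $\sum_m\Phi_m'''(\nu m-\sqrt{2Km})m^{3/2}$ are finite. *)

theory Defs
  imports "HOL-Analysis.Analysis"
begin

definition Aop :: "nat \<Rightarrow> (real \<Rightarrow> real) \<Rightarrow> real \<Rightarrow> real" where
  "Aop m f \<xi> = (LBINT s:{\<xi> - real m / 2 .. \<xi> + real m / 2}. f s)"

text \<open>Psi_m(r) = Phi_m(nu m - r) - Phi_m(nu m) + Phi_m'(nu m) r; Phi1 is the derivative of Phi.\<close>
definition Psi :: "(nat \<Rightarrow> real \<Rightarrow> real) \<Rightarrow> (nat \<Rightarrow> real \<Rightarrow> real) \<Rightarrow> real \<Rightarrow> nat \<Rightarrow> real \<Rightarrow> real" where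
  "Psi \<Phi> \<Phi>1 \<nu> m r = \<Phi> m (\<nu> * real m - r) - \<Phi> m (\<nu> * real m) + \<Phi>1 m (\<nu> * real m) * r"

definition Psi' :: "(nat \<Rightarrow> real \<Rightarrow> real) \<Rightarrow> real \<Rightarrow> nat \<Rightarrow> real \<Rightarrow> real" where
  "Psi' \<Phi>1 \<nu> m r = - \<Phi>1 m (\<nu> * real m - r) + \<Phi>1 m (\<nu> * real m)"

definition Pfun :: "(nat \<Rightarrow> real \<Rightarrow> real) \<Rightarrow> (nat \<Rightarrow> real \<Rightarrow> real) \<Rightarrow> real \<Rightarrow> (real \<Rightarrow> real) \<Rightarrow> real" where
  "Pfun \<Phi> \<Phi>1 \<nu> W = (LINT s|lborel. (\<Sum>m. Psi \<Phi> \<Phi>1 \<nu> (Suc m) (Aop (Suc m) W s)))"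

definition dP :: "(nat \<Rightarrow> real \<Rightarrow> real) \<Rightarrow> real \<Rightarrow> (real \<Rightarrow> real) \<Rightarrow> real \<Rightarrow> real" where
  "dP \<Phi>1 \<nu> W = (\<lambda>\<xi>. \<Sum>m. Aop (Suc m) (\<lambda>s. Psi' \<Phi>1 \<nu> (Suc m) (Aop (Suc m) W s)) \<xi>)"

definition L2norm :: "(real \<Rightarrow> real) \<Rightarrow> real" where
  "L2norm f = sqrt (LINT x|lborel. (f x)\<^sup>2)"

definition muW :: "(nat \<Rightarrow> real \<Rightarrow> real) \<Rightarrow> real \<Rightarrow> (real \<Rightarrow> real) \<Rightarrow> real" where
  "muW \<Phi>1 \<nu> W = L2norm W / L2norm (dP \<Phi>1 \<nu> W)"

definition Top :: "(nat \<Rightarrow> real \<Rightarrow> real) \<Rightarrow> real \<Rightarrow> (real \<Rightarrow> real) \<Rightarrow> real \<Rightarrow> real" where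
  "Top \<Phi>1 \<nu> W = (\<lambda>\<xi>. muW \<Phi>1 \<nu> W * dP \<Phi>1 \<nu> W \<xi>)"

text \<open>Generating set of C: smooth, compactly supported, even, nonnegative, nonincreasing on [0,oo).
  C^infinity is written out: a sequence of successive derivatives D with D 0 = W.\<close>
definition C0 :: "(real \<Rightarrow> real) set" where
  "C0 = {W. (\<exists>D :: nat \<Rightarrow> real \<Rightarrow> real. D 0 = W \<and>
              (\<forall>k x. (D k has_real_derivative D (Suc k) x) (at x)) \<and>
              (\<exists>R. \<forall>x. \<bar>x\<bar> > R \<longrightarrow> W x = 0) \<and>
              (\<forall>x\<ge>0. W x = W (-x) \<and> W x \<ge> 0 \<and> D 1 x = - D 1 (-x) \<and> D 1 x \<le> 0))}"

definition square_integrable :: "(real \<Rightarrow> real) \<Rightarrow> bool" where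
  "square_integrable f \<longleftrightarrow> f \<in> borel_measurable lborel \<and> integrable lborel (\<lambda>x. (f x)\<^sup>2)"

text \<open>C = L^2 closure of C0 (as a set of functions, i.e. all representatives).\<close>
definition Ccl :: "(real \<Rightarrow> real) set" where
  "Ccl = {W. square_integrable W \<and>
            (\<exists>f :: nat \<Rightarrow> real \<Rightarrow> real. (\<forall>n. f n \<in> C0) \<and>
               (\<lambda>n. LINT x|lborel. (f n x - W x)\<^sup>2) \<longlonglongrightarrow> 0)}"

definition CK :: "real \<Rightarrow> (real \<Rightarrow> real) set" where
  "CK K = {W \<in> Ccl. (1/2) * (L2norm W)\<^sup>2 = K}"

end

theory Submission
  imports Defs
begin

lemma deriv_at_of_within:
  assumes d: "\<And>x. x \<ge> 0 \<Longrightarrow> (F has_real_derivative F' x) (at x within {0..})" and x: "x > 0"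
  shows "(F has_real_derivative F' x) (at x)"
proof -
  have "(F has_real_derivative F' x) (at x within {0..})" by (rule d) (use x in linarith)
  then have "(F has_real_derivative F' x) (at x within {0<..})"
    by (rule has_field_derivative_subset) auto
  moreover have "at x within {0<..} = at x" by (rule at_within_open) (use x in auto)
  ultimately show ?thesis by simp
qed



lemma meas_ind:
  fixes c :: real
  shows "(\<lambda>p::real\<times>real. indicator {fst p - c..fst p + c} (snd p) :: real) \<in> borel_measurable (lborel \<Otimes>\<^sub>M lborel)"
proof -
  have "(\<lambda>p::real\<times>real. indicator {fst p - c..fst p + c} (snd p) :: real) = (\<lambda>p. if fst p - c \<le> snd p \<and> snd p \<le> fst p + c then 1 else 0)"
    by (auto simp: indicator_def fun_eq_iff)
  also have "\<dots> \<in> borel_measurable (lborel \<Otimes>\<^sub>M lborel)"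
    by measurable
  finally show ?thesis .
qed

lemma Aop_meas:
  assumes [measurable]: "f \<in> borel_measurable lborel"
  shows "Aop m f \<in> borel_measurable lborel"
proof -
  have "(\<lambda>p::real\<times>real. indicator {fst p - real m/2..fst p + real m/2} (snd p) *\<^sub>R f (snd p)) \<in> borel_measurable (lborel \<Otimes>\<^sub>M lborel)"
    using meas_ind[of "real m/2"] by measurable
  then have "(\<lambda>\<xi>. \<integral>s. indicator {\<xi> - real m/2..\<xi> + real m/2} s *\<^sub>R f s \<partial>lborel) \<in> borel_measurable lborel"
    by (intro lborel.borel_measurable_lebesgue_integral) (simp add: case_prod_beta')
  then show ?thesis unfolding Aop_def[abs_def] set_lebesgue_integral_def by simp
qed




lemma CS_int:
  fixes f g :: "'a \<Rightarrow> real"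
  assumes [measurable]: "f \<in> borel_measurable M" "g \<in> borel_measurable M"
    and fi: "integrable M (\<lambda>x. (f x)\<^sup>2)" and gi: "integrable M (\<lambda>x. (g x)\<^sup>2)"
  shows CS_int_integrable: "integrable M (\<lambda>x. f x * g x)"
    and CS_int_ineq: "(\<integral>x. f x * g x \<partial>M)\<^sup>2 \<le> (\<integral>x. (f x)\<^sup>2 \<partial>M) * (\<integral>x. (g x)\<^sup>2 \<partial>M)"
proof -
  show fg: "integrable M (\<lambda>x. f x * g x)"
  proof (rule Bochner_Integration.integrable_bound[OF Bochner_Integration.integrable_add[OF fi gi]])
    show "(\<lambda>x. f x * g x) \<in> borel_measurable M" by measurable
    show "AE x in M. norm (f x * g x) \<le> norm ((f x)\<^sup>2 + (g x)\<^sup>2)"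
    proof (rule AE_I2)
      fix x
      have "0 \<le> (\<bar>f x\<bar> - \<bar>g x\<bar>)\<^sup>2" by simp
      then have "2 * (\<bar>f x\<bar> * \<bar>g x\<bar>) \<le> (f x)\<^sup>2 + (g x)\<^sup>2"
        by (simp add: power2_eq_square algebra_simps)
      moreover have "0 \<le> \<bar>f x\<bar> * \<bar>g x\<bar>" by simp
      ultimately have "\<bar>f x\<bar> * \<bar>g x\<bar> \<le> (f x)\<^sup>2 + (g x)\<^sup>2" by linarith
      then show "norm (f x * g x) \<le> norm ((f x)\<^sup>2 + (g x)\<^sup>2)"
        by (simp add: abs_mult)
    qed
  qed
  define A where "A = (\<integral>x. (f x)\<^sup>2 \<partial>M)"
  define B where "B = (\<integral>x. f x * g x \<partial>M)"
  define C where "C = (\<integral>x. (g x)\<^sup>2 \<partial>M)"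
  have q: "0 \<le> t\<^sup>2 * A - 2 * t * B + C" for t
  proof -
    have "(\<lambda>x. (t * f x - g x)\<^sup>2) = (\<lambda>x. t\<^sup>2 * (f x)\<^sup>2 - 2 * t * (f x * g x) + (g x)\<^sup>2)"
      by (auto simp: power2_eq_square algebra_simps)
    then have "(\<integral>x. (t * f x - g x)\<^sup>2 \<partial>M) = t\<^sup>2 * A - 2 * t * B + C"
      unfolding A_def B_def C_def using fi gi fg by simp
    moreover have "0 \<le> (\<integral>x. (t * f x - g x)\<^sup>2 \<partial>M)" by simp
    ultimately show ?thesis by simp
  qed
  have A0: "0 \<le> A" unfolding A_def by simp
  show "B\<^sup>2 \<le> A * C"
  proof (cases "A = 0")
    case True
    show ?thesis
    proof (rule ccontr)
      assume "\<not> ?thesis"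
      then have "B \<noteq> 0" using True by simp
      have "0 \<le> ((C+1)/(2*B))\<^sup>2 * A - 2 * ((C+1)/(2*B)) * B + C" by (rule q)
      also have "\<dots> = -1" using True \<open>B \<noteq> 0\<close> by (simp add: field_simps)
      finally show False by simp
    qed
  next
    case False
    then have "A > 0" using A0 by simp
    have "0 \<le> (B/A)\<^sup>2 * A - 2 * (B/A) * B + C" by (rule q)
    also have "\<dots> = C - B\<^sup>2 / A" using \<open>A > 0\<close> by (simp add: field_simps power2_eq_square)
    finally have "B\<^sup>2 / A \<le> C" by simp
    then show ?thesis using \<open>A > 0\<close> by (simp add: field_simps mult.commute)
  qed
qed

lemma sqi_loc_int:
  assumes "square_integrable f"
  shows "set_integrable lborel {a..b} f"
proof -
  have [measurable]: "f \<in> borel_measurable lborel" and fi: "integrable lborel (\<lambda>x. (f x)\<^sup>2)"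
    using assms by (auto simp: square_integrable_def)
  have "integrable lborel (\<lambda>x. indicator {a..b} x * (1 + (f x)\<^sup>2) :: real)"
  proof -
    have "integrable lborel (\<lambda>x. indicator {a..b} x :: real)" by (simp add: integrable_indicator_iff emeasure_lborel_Icc_eq)
    moreover have "integrable lborel (\<lambda>x. indicator {a..b} x * (f x)\<^sup>2 :: real)"
      using integrable_mult_indicator[of "{a..b}" lborel "\<lambda>x. (f x)\<^sup>2"] fi by simp
    ultimately show ?thesis by (simp add: distrib_left)
  qed
  then show ?thesis
    unfolding set_integrable_def
  proof (rule Bochner_Integration.integrable_bound)
    show "(\<lambda>x. indicator {a..b} x *\<^sub>R f x) \<in> borel_measurable lborel" by measurable
    show "AE x in lborel. norm (indicator {a..b} x *\<^sub>R f x) \<le> norm (indicator {a..b} x * (1 + (f x)\<^sup>2) :: real)"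
    proof (rule AE_I2)
      fix x
      have "\<bar>f x\<bar> \<le> 1 + (f x)\<^sup>2"
      proof -
        have "0 \<le> (\<bar>f x\<bar> - 1)\<^sup>2" by simp
        then show ?thesis by (simp add: power2_eq_square algebra_simps)
      qed
      then show "norm (indicator {a..b} x *\<^sub>R f x) \<le> norm (indicator {a..b} x * (1 + (f x)\<^sup>2) :: real)"
        by (auto simp: indicator_def)
    qed
  qed
qed




definition Iset :: "real \<Rightarrow> (real \<times> real) set" where
  "Iset c = {p. fst p - c \<le> snd p \<and> snd p \<le> fst p + c}"

lemma Iset_meas: "Iset c \<in> sets (lborel \<Otimes>\<^sub>M lborel)"
proof -
  have "Measurable.pred (lborel \<Otimes>\<^sub>M lborel) (\<lambda>p::real\<times>real. fst p - c \<le> snd p \<and> snd p \<le> fst p + c)"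
    by measurable
  from predE[OF this] show ?thesis by (simp add: Iset_def space_pair_measure)
qed

lemma ind_Iset: "indicator {\<xi> - c..\<xi> + c} s = indicator (Iset c) (\<xi>, s)"
  by (auto simp: indicator_def Iset_def)

lemma ind_swap: "indicator {\<xi> - c..\<xi> + (c::real)} s = (indicator {s - c..s + c} \<xi> :: 'a::zero_neq_one)"
  by (auto simp: indicator_def)

lemma Aop_eq: "Aop m f \<xi> = (\<integral>s. indicator {\<xi> - real m/2..\<xi> + real m/2} s * f s \<partial>lborel)"
  by (simp add: Aop_def set_lebesgue_integral_def)

lemma Aop_sq:
  assumes "square_integrable f"
  shows "(Aop m f \<xi>)\<^sup>2 \<le> real m * (\<integral>s. indicator {\<xi> - real m/2..\<xi> + real m/2} s * (f s)\<^sup>2 \<partial>lborel)"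
    and "(Aop m f \<xi>)\<^sup>2 \<le> real m * (\<integral>s. (f s)\<^sup>2 \<partial>lborel)"
proof -
  have [measurable]: "f \<in> borel_measurable lborel" and fi: "integrable lborel (\<lambda>x. (f x)\<^sup>2)"
    using assms by (auto simp: square_integrable_def)
  define S where "S = {\<xi> - real m/2..\<xi> + real m/2}"
  have i1: "integrable lborel (\<lambda>x. (indicator S x * f x)\<^sup>2)"
  proof -
    have "integrable lborel (\<lambda>x. indicator S x *\<^sub>R (f x)\<^sup>2)"
      by (rule integrable_mult_indicator) (auto simp: S_def fi)
    moreover have "(\<lambda>x. (indicator S x * f x)\<^sup>2) = (\<lambda>x. indicator S x *\<^sub>R (f x)\<^sup>2)"
      by (auto simp: fun_eq_iff indicator_def)
    ultimately show ?thesis by simp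
  qed
  have i2: "integrable lborel (\<lambda>x. (indicator S x :: real)\<^sup>2)"
  proof -
    have "(\<lambda>x. (indicator S x :: real)\<^sup>2) = indicator S" by (auto simp: indicator_def fun_eq_iff)
    then show ?thesis by (simp add: S_def integrable_indicator_iff emeasure_lborel_Icc_eq)
  qed
  have "(\<integral>x. (indicator S x * f x) * indicator S x \<partial>lborel)\<^sup>2
        \<le> (\<integral>x. (indicator S x * f x)\<^sup>2 \<partial>lborel) * (\<integral>x. (indicator S x :: real)\<^sup>2 \<partial>lborel)"
    by (rule CS_int_ineq[OF _ _ i1 i2]) (auto simp: S_def)
  moreover have "(\<integral>x. (indicator S x * f x) * indicator S x \<partial>lborel) = Aop m f \<xi>"
    unfolding Aop_eq S_def by (rule Bochner_Integration.integral_cong) (auto simp: indicator_def)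
  moreover have "(\<integral>x. (indicator S x :: real)\<^sup>2 \<partial>lborel) = real m"
  proof -
    have "(\<integral>x. (indicator S x :: real)\<^sup>2 \<partial>lborel) = (\<integral>x. indicator S x \<partial>lborel)"
      by (rule Bochner_Integration.integral_cong) (auto simp: indicator_def)
    also have "\<dots> = measure lborel S" by (simp add: S_def)
    also have "\<dots> = real m" by (simp add: S_def)
    finally show ?thesis .
  qed
  moreover have "(\<integral>x. (indicator S x * f x)\<^sup>2 \<partial>lborel) = (\<integral>s. indicator S s * (f s)\<^sup>2 \<partial>lborel)"
    by (rule Bochner_Integration.integral_cong) (auto simp: indicator_def)
  ultimately show a: "(Aop m f \<xi>)\<^sup>2 \<le> real m * (\<integral>s. indicator {\<xi> - real m/2..\<xi> + real m/2} s * (f s)\<^sup>2 \<partial>lborel)"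
    by (simp add: S_def mult.commute)
  have "(\<integral>s. indicator S s * (f s)\<^sup>2 \<partial>lborel) \<le> (\<integral>s. (f s)\<^sup>2 \<partial>lborel)"
  proof (rule integral_mono)
    show "integrable lborel (\<lambda>s. indicator S s * (f s)\<^sup>2)"
      using integrable_mult_indicator[of S lborel "\<lambda>s. (f s)\<^sup>2"] fi by (simp add: S_def)
  qed (auto simp: fi indicator_def)
  with a show "(Aop m f \<xi>)\<^sup>2 \<le> real m * (\<integral>s. (f s)\<^sup>2 \<partial>lborel)"
    unfolding S_def by (meson mult_left_mono of_nat_0_le_iff order_trans)
qed

lemma Aop_bound:
  assumes [measurable]: "f \<in> borel_measurable lborel" and b: "\<And>x. \<bar>f x\<bar> \<le> M"
  shows "\<bar>Aop m f \<xi>\<bar> \<le> real m * M"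
proof -
  define S where "S = {\<xi> - real m/2..\<xi> + real m/2}"
  have iS: "integrable lborel (\<lambda>x. indicator S x * M)"
    by (simp add: S_def integrable_indicator_iff emeasure_lborel_Icc_eq)
  have iF: "integrable lborel (\<lambda>x. indicator S x * f x)"
  proof (rule Bochner_Integration.integrable_bound[OF iS])
    show "(\<lambda>x. indicator S x * f x) \<in> borel_measurable lborel" by (simp add: S_def)
    show "AE x in lborel. norm (indicator S x * f x) \<le> norm (indicator S x * M)"
    proof (rule AE_I2)
      fix x
      have "\<bar>f x\<bar> \<le> \<bar>M\<bar>" using b[of x] by linarith
      then show "norm (indicator S x * f x) \<le> norm (indicator S x * M)"
        by (cases "x \<in> S") auto
    qed
  qed
  have "\<bar>Aop m f \<xi>\<bar> = \<bar>\<integral>x. indicator S x * f x \<partial>lborel\<bar>" by (simp add: Aop_eq S_def)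
  also have "\<dots> \<le> (\<integral>x. \<bar>indicator S x * f x\<bar> \<partial>lborel)" by (rule integral_abs_bound)
  also have "\<dots> \<le> (\<integral>x. indicator S x * M \<partial>lborel)"
  proof (rule integral_mono)
    show "integrable lborel (\<lambda>x. \<bar>indicator S x * f x\<bar>)" using iF by simp
    show "integrable lborel (\<lambda>x. indicator S x * M)" using iS .
    fix x show "\<bar>indicator S x * f x\<bar> \<le> indicator S x * M"
      using b[of x] by (cases "x \<in> S") auto
  qed
  also have "\<dots> = measure lborel S * M" by (simp add: S_def)
  also have "\<dots> = real m * M" by (simp add: S_def)
  finally show ?thesis .
qed

lemma Aop_cong:
  assumes "f \<in> borel_measurable lborel" "g \<in> borel_measurable lborel" "AE x in lborel. f x = g x"
  shows "Aop m f \<xi> = Aop m g \<xi>"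
  unfolding Aop_eq
  by (rule integral_cong_AE) (use assms in auto)

lemma Aop_add_const:
  assumes "set_integrable lborel {\<xi> - real m/2..\<xi> + real m/2} f"
  shows "Aop m (\<lambda>s. f s + c) \<xi> = Aop m f \<xi> + real m * c"
proof -
  have "Aop m (\<lambda>s. f s + c) \<xi> = Aop m f \<xi> + (LBINT s:{\<xi> - real m/2..\<xi> + real m/2}. c)"
    unfolding Aop_def
    by (rule set_integral_add) (use assms in \<open>auto simp: set_integrable_def integrable_indicator_iff emeasure_lborel_Icc_eq\<close>)
  also have "(LBINT s:{\<xi> - real m/2..\<xi> + real m/2}. c) = real m * c"
    by (simp add: set_lebesgue_integral_def)
  finally show ?thesis .
qed

lemma tonelli_Aop:
  fixes g :: "real \<Rightarrow> ennreal"
  assumes [measurable]: "g \<in> borel_measurable lborel" and c: "0 \<le> c"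
  shows "(\<integral>\<^sup>+\<xi>. (\<integral>\<^sup>+s. indicator {\<xi> - c..\<xi> + c} s * g s \<partial>lborel) \<partial>lborel) = ennreal (2*c) * (\<integral>\<^sup>+s. g s \<partial>lborel)"
proof -
  have m: "(\<lambda>p::real\<times>real. indicator (Iset c) p * g (snd p)) \<in> borel_measurable (lborel \<Otimes>\<^sub>M lborel)"
    using Iset_meas[of c] by measurable
  have "(\<integral>\<^sup>+\<xi>. (\<integral>\<^sup>+s. indicator {\<xi> - c..\<xi> + c} s * g s \<partial>lborel) \<partial>lborel)
      = (\<integral>\<^sup>+\<xi>. (\<integral>\<^sup>+s. indicator (Iset c) (\<xi>, s) * g s \<partial>lborel) \<partial>lborel)"
    by (simp add: ind_Iset)
  also have "\<dots> = (\<integral>\<^sup>+s. (\<integral>\<^sup>+\<xi>. indicator (Iset c) (\<xi>, s) * g s \<partial>lborel) \<partial>lborel)"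
    by (rule lborel_pair.Fubini'[symmetric]) (use m in \<open>simp add: case_prod_beta'\<close>)
  also have "\<dots> = (\<integral>\<^sup>+s. g s * (\<integral>\<^sup>+\<xi>. indicator {s - c..s + c} \<xi> \<partial>lborel) \<partial>lborel)"
  proof (rule nn_integral_cong)
    fix s
    have "(\<integral>\<^sup>+\<xi>. indicator (Iset c) (\<xi>, s) * g s \<partial>lborel) = (\<integral>\<^sup>+\<xi>. g s * indicator {s - c..s + c} \<xi> \<partial>lborel)"
      by (rule nn_integral_cong) (auto simp: Iset_def indicator_def)
    then show "(\<integral>\<^sup>+\<xi>. indicator (Iset c) (\<xi>, s) * g s \<partial>lborel) = g s * (\<integral>\<^sup>+\<xi>. indicator {s - c..s + c} \<xi> \<partial>lborel)"
      by (simp add: nn_integral_cmult)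
  qed
  also have "\<dots> = (\<integral>\<^sup>+s. g s * ennreal (2*c) \<partial>lborel)"
    using c by (simp add: emeasure_lborel_Icc_eq)
  also have "\<dots> = ennreal (2*c) * (\<integral>\<^sup>+s. g s \<partial>lborel)"
    by (simp add: nn_integral_multc mult.commute)
  finally show ?thesis .
qed




lemma sqi_meas: "square_integrable f \<Longrightarrow> f \<in> borel_measurable lborel"
  and sqi_int: "square_integrable f \<Longrightarrow> integrable lborel (\<lambda>x. (f x)\<^sup>2)"
  by (auto simp: square_integrable_def)

lemma ennreal_ind_mult: "ennreal (indicator S x * (a::real)) = indicator S x * ennreal a"
  by (auto simp: indicator_def)

lemma Aop_L2:
  assumes "square_integrable f"
  shows Aop_L2_sqi: "square_integrable (Aop m f)"
    and Aop_L2_le: "(\<integral>\<xi>. (Aop m f \<xi>)\<^sup>2 \<partial>lborel) \<le> (real m)\<^sup>2 * (\<integral>s. (f s)\<^sup>2 \<partial>lborel)"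
proof -
  have [measurable]: "f \<in> borel_measurable lborel" and fi: "integrable lborel (\<lambda>x. (f x)\<^sup>2)"
    using assms by (auto simp: square_integrable_def)
  have [measurable]: "Aop m f \<in> borel_measurable lborel" by (rule Aop_meas) simp
  define c where "c = real m / 2"
  have c0: "0 \<le> c" by (simp add: c_def)
  have nnJ: "ennreal (\<integral>s. indicator {\<xi> - c..\<xi> + c} s * (f s)\<^sup>2 \<partial>lborel)
      = (\<integral>\<^sup>+s. indicator {\<xi> - c..\<xi> + c} s * ennreal ((f s)\<^sup>2) \<partial>lborel)" for \<xi>
  proof -
    have "integrable lborel (\<lambda>s. indicator {\<xi> - c..\<xi> + c} s * (f s)\<^sup>2)"
      using integrable_mult_indicator[of "{\<xi> - c..\<xi> + c}" lborel "\<lambda>s. (f s)\<^sup>2"] fi by simp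
    then have "(\<integral>\<^sup>+s. ennreal (indicator {\<xi> - c..\<xi> + c} s * (f s)\<^sup>2) \<partial>lborel)
        = ennreal (\<integral>s. indicator {\<xi> - c..\<xi> + c} s * (f s)\<^sup>2 \<partial>lborel)"
      by (rule nn_integral_eq_integral) auto
    then show ?thesis by (simp add: ennreal_ind_mult)
  qed
  have pt: "ennreal ((Aop m f \<xi>)\<^sup>2) \<le> ennreal (real m) * (\<integral>\<^sup>+s. indicator {\<xi> - c..\<xi> + c} s * ennreal ((f s)\<^sup>2) \<partial>lborel)" for \<xi>
  proof -
    have "(Aop m f \<xi>)\<^sup>2 \<le> real m * (\<integral>s. indicator {\<xi> - c..\<xi> + c} s * (f s)\<^sup>2 \<partial>lborel)"
      using Aop_sq(1)[OF assms, of m \<xi>] by (simp add: c_def)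
    then have "ennreal ((Aop m f \<xi>)\<^sup>2) \<le> ennreal (real m * (\<integral>s. indicator {\<xi> - c..\<xi> + c} s * (f s)\<^sup>2 \<partial>lborel))"
      by (rule ennreal_leI)
    also have "\<dots> = ennreal (real m) * ennreal (\<integral>s. indicator {\<xi> - c..\<xi> + c} s * (f s)\<^sup>2 \<partial>lborel)"
      by (rule ennreal_mult) (auto intro: Bochner_Integration.integral_nonneg)
    finally show ?thesis by (simp add: nnJ)
  qed
  have fnn: "(\<integral>\<^sup>+s. ennreal ((f s)\<^sup>2) \<partial>lborel) = ennreal (\<integral>s. (f s)\<^sup>2 \<partial>lborel)"
    by (rule nn_integral_eq_integral) (use fi in auto)
  have bound: "(\<integral>\<^sup>+\<xi>. ennreal ((Aop m f \<xi>)\<^sup>2) \<partial>lborel) \<le> ennreal ((real m)\<^sup>2 * (\<integral>s. (f s)\<^sup>2 \<partial>lborel))"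
  proof -
    have "(\<integral>\<^sup>+\<xi>. ennreal ((Aop m f \<xi>)\<^sup>2) \<partial>lborel)
        \<le> (\<integral>\<^sup>+\<xi>. ennreal (real m) * (\<integral>\<^sup>+s. indicator {\<xi> - c..\<xi> + c} s * ennreal ((f s)\<^sup>2) \<partial>lborel) \<partial>lborel)"
      by (rule nn_integral_mono) (rule pt)
    also have "\<dots> = ennreal (real m) * (\<integral>\<^sup>+\<xi>. (\<integral>\<^sup>+s. indicator {\<xi> - c..\<xi> + c} s * ennreal ((f s)\<^sup>2) \<partial>lborel) \<partial>lborel)"
    proof (rule nn_integral_cmult)
      have "(\<lambda>p::real\<times>real. indicator (Iset c) p * ennreal ((f (snd p))\<^sup>2)) \<in> borel_measurable (lborel \<Otimes>\<^sub>M lborel)"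
        using Iset_meas[of c] by measurable
      then have "(\<lambda>\<xi>. \<integral>\<^sup>+s. indicator (Iset c) (\<xi>, s) * ennreal ((f s)\<^sup>2) \<partial>lborel) \<in> borel_measurable lborel"
        by (rule lborel.borel_measurable_nn_integral_fst[where f="\<lambda>p. indicator (Iset c) p * ennreal ((f (snd p))\<^sup>2)", simplified])
      then show "(\<lambda>\<xi>. \<integral>\<^sup>+s. indicator {\<xi> - c..\<xi> + c} s * ennreal ((f s)\<^sup>2) \<partial>lborel) \<in> borel_measurable lborel"
        by (simp add: ind_Iset)
    qed
    also have "\<dots> = ennreal (real m) * (ennreal (2*c) * ennreal (\<integral>s. (f s)\<^sup>2 \<partial>lborel))"
      by (subst tonelli_Aop) (auto simp: c0 fnn)
    also have "\<dots> = ennreal ((real m)\<^sup>2 * (\<integral>s. (f s)\<^sup>2 \<partial>lborel))"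
      by (simp add: c_def power2_eq_square ennreal_mult[symmetric] mult.assoc)
    finally show ?thesis .
  qed
  have int: "integrable lborel (\<lambda>\<xi>. (Aop m f \<xi>)\<^sup>2)"
  proof (rule integrableI_bounded)
    show "(\<lambda>\<xi>. (Aop m f \<xi>)\<^sup>2) \<in> borel_measurable lborel" by measurable
    have "(\<integral>\<^sup>+\<xi>. ennreal (norm ((Aop m f \<xi>)\<^sup>2)) \<partial>lborel) = (\<integral>\<^sup>+\<xi>. ennreal ((Aop m f \<xi>)\<^sup>2) \<partial>lborel)"
      by simp
    also have "\<dots> < \<infinity>" using bound by (simp add: le_less_trans)
    finally show "(\<integral>\<^sup>+\<xi>. ennreal (norm ((Aop m f \<xi>)\<^sup>2)) \<partial>lborel) < \<infinity>" .
  qed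
  then show "square_integrable (Aop m f)" by (simp add: square_integrable_def)
  have "ennreal (\<integral>\<xi>. (Aop m f \<xi>)\<^sup>2 \<partial>lborel) = (\<integral>\<^sup>+\<xi>. ennreal ((Aop m f \<xi>)\<^sup>2) \<partial>lborel)"
    by (rule nn_integral_eq_integral[symmetric]) (use int in auto)
  with bound have "ennreal (\<integral>\<xi>. (Aop m f \<xi>)\<^sup>2 \<partial>lborel) \<le> ennreal ((real m)\<^sup>2 * (\<integral>s. (f s)\<^sup>2 \<partial>lborel))"
    by simp
  then show "(\<integral>\<xi>. (Aop m f \<xi>)\<^sup>2 \<partial>lborel) \<le> (real m)\<^sup>2 * (\<integral>s. (f s)\<^sup>2 \<partial>lborel)"
    by (subst (asm) ennreal_le_iff) (auto intro!: mult_nonneg_nonneg)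
qed




lemma sqi_abs: "square_integrable f \<Longrightarrow> square_integrable (\<lambda>x. \<bar>f x\<bar>)"
  unfolding square_integrable_def by (auto intro: borel_measurable_abs)

lemma Aop_nonneg: "(\<And>x. 0 \<le> f x) \<Longrightarrow> 0 \<le> Aop m f \<xi>"
  unfolding Aop_eq by (rule Bochner_Integration.integral_nonneg) (auto simp: indicator_def)

lemma sqi_prod_int:
  "square_integrable f \<Longrightarrow> square_integrable g \<Longrightarrow> integrable lborel (\<lambda>x. f x * g x)"
  by (rule CS_int_integrable) (auto simp: square_integrable_def)

lemma sqi_prod_le:
  "square_integrable f \<Longrightarrow> square_integrable g \<Longrightarrow>
   (\<integral>x. f x * g x \<partial>lborel)\<^sup>2 \<le> (\<integral>x. (f x)\<^sup>2 \<partial>lborel) * (\<integral>x. (g x)\<^sup>2 \<partial>lborel)"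
  by (rule CS_int_ineq) (auto simp: square_integrable_def)

lemma Aop_adj:
  assumes f: "square_integrable f" and g: "square_integrable g"
  shows "(\<integral>\<xi>. Aop m g \<xi> * f \<xi> \<partial>lborel) = (\<integral>s. g s * Aop m f s \<partial>lborel)"
proof -
  have [measurable]: "f \<in> borel_measurable lborel" "g \<in> borel_measurable lborel"
    using f g by (auto simp: square_integrable_def)
  define c where "c = real m / 2"
  have c0: "0 \<le> c" by (simp add: c_def)
  define F where "F = (\<lambda>p::real\<times>real. indicator (Iset c) p * g (snd p) * f (fst p))"
  have Fm[measurable]: "F \<in> borel_measurable (lborel \<Otimes>\<^sub>M lborel)"
    unfolding F_def using Iset_meas[of c] by measurable
  have ga: "square_integrable (\<lambda>x. \<bar>g x\<bar>)" by (rule sqi_abs[OF g])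
  have inner: "(\<integral>\<^sup>+s. ennreal (norm (F (\<xi>, s))) \<partial>lborel) = ennreal (\<bar>f \<xi>\<bar> * Aop m (\<lambda>x. \<bar>g x\<bar>) \<xi>)" for \<xi>
  proof -
    have si: "integrable lborel (\<lambda>s. indicator {\<xi> - c..\<xi> + c} s * \<bar>g s\<bar>)"
      using sqi_loc_int[OF ga, of "\<xi> - c" "\<xi> + c"] by (simp add: set_integrable_def)
    have "(\<integral>\<^sup>+s. ennreal (norm (F (\<xi>, s))) \<partial>lborel) = (\<integral>\<^sup>+s. ennreal \<bar>f \<xi>\<bar> * ennreal (indicator {\<xi> - c..\<xi> + c} s * \<bar>g s\<bar>) \<partial>lborel)"
      by (rule nn_integral_cong) (auto simp: F_def ind_Iset[symmetric] abs_mult ennreal_mult[symmetric] mult_ac)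
    also have "\<dots> = ennreal \<bar>f \<xi>\<bar> * (\<integral>\<^sup>+s. ennreal (indicator {\<xi> - c..\<xi> + c} s * \<bar>g s\<bar>) \<partial>lborel)"
      by (rule nn_integral_cmult) simp
    also have "(\<integral>\<^sup>+s. ennreal (indicator {\<xi> - c..\<xi> + c} s * \<bar>g s\<bar>) \<partial>lborel) = ennreal (Aop m (\<lambda>x. \<bar>g x\<bar>) \<xi>)"
      unfolding Aop_eq c_def[symmetric] by (rule nn_integral_eq_integral[OF si]) auto
    finally show ?thesis by (simp add: ennreal_mult[symmetric] Aop_nonneg)
  qed
  have Fint: "integrable (lborel \<Otimes>\<^sub>M lborel) F"
  proof (rule integrableI_bounded)
    show "F \<in> borel_measurable (lborel \<Otimes>\<^sub>M lborel)" by simp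
    have "(\<integral>\<^sup>+p. ennreal (norm (F p)) \<partial>(lborel \<Otimes>\<^sub>M lborel))
        = (\<integral>\<^sup>+\<xi>. (\<integral>\<^sup>+s. ennreal (norm (F (\<xi>, s))) \<partial>lborel) \<partial>lborel)"
      using lborel.nn_integral_fst[of "\<lambda>p. ennreal (norm (F p))" lborel] by simp
    also have "\<dots> = (\<integral>\<^sup>+\<xi>. ennreal (\<bar>f \<xi>\<bar> * Aop m (\<lambda>x. \<bar>g x\<bar>) \<xi>) \<partial>lborel)"
      by (intro nn_integral_cong inner)
    also have "\<dots> < \<infinity>"
    proof -
      have "integrable lborel (\<lambda>\<xi>. \<bar>f \<xi>\<bar> * Aop m (\<lambda>x. \<bar>g x\<bar>) \<xi>)"
        by (rule sqi_prod_int[OF sqi_abs[OF f] Aop_L2_sqi[OF ga]])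
      then have "(\<integral>\<^sup>+\<xi>. ennreal (norm (\<bar>f \<xi>\<bar> * Aop m (\<lambda>x. \<bar>g x\<bar>) \<xi>)) \<partial>lborel) < \<infinity>"
        by (simp add: integrable_iff_bounded)
      moreover have "(\<integral>\<^sup>+\<xi>. ennreal (\<bar>f \<xi>\<bar> * Aop m (\<lambda>x. \<bar>g x\<bar>) \<xi>) \<partial>lborel)
          \<le> (\<integral>\<^sup>+\<xi>. ennreal (norm (\<bar>f \<xi>\<bar> * Aop m (\<lambda>x. \<bar>g x\<bar>) \<xi>)) \<partial>lborel)"
        by (rule nn_integral_mono) (simp add: ennreal_leI)
      ultimately show ?thesis by (simp add: le_less_trans)
    qed
    finally show "(\<integral>\<^sup>+p. ennreal (norm (F p)) \<partial>(lborel \<Otimes>\<^sub>M lborel)) < \<infinity>" .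
  qed
  have "(\<integral>s. (\<integral>\<xi>. F (\<xi>, s) \<partial>lborel) \<partial>lborel) = (\<integral>\<xi>. (\<integral>s. F (\<xi>, s) \<partial>lborel) \<partial>lborel)"
    by (rule lborel_pair.Fubini_integral[where f="\<lambda>x y. F (x, y)"]) (use Fint in \<open>simp add: case_prod_beta'\<close>)
  moreover have "(\<integral>s. F (\<xi>, s) \<partial>lborel) = Aop m g \<xi> * f \<xi>" for \<xi>
  proof -
    have "(\<integral>s. F (\<xi>, s) \<partial>lborel) = (\<integral>s. (indicator {\<xi> - c..\<xi> + c} s * g s) * f \<xi> \<partial>lborel)"
      by (rule Bochner_Integration.integral_cong) (auto simp: F_def ind_Iset)
    also have "\<dots> = Aop m g \<xi> * f \<xi>"
      by (simp add: Aop_eq c_def)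
    finally show ?thesis .
  qed
  moreover have "(\<integral>\<xi>. F (\<xi>, s) \<partial>lborel) = g s * Aop m f s" for s
  proof -
    have "(\<integral>\<xi>. F (\<xi>, s) \<partial>lborel) = (\<integral>\<xi>. g s * (indicator {s - c..s + c} \<xi> * f \<xi>) \<partial>lborel)"
      by (rule Bochner_Integration.integral_cong) (auto simp: F_def Iset_def indicator_def)
    also have "\<dots> = g s * Aop m f s"
      by (simp add: Aop_eq c_def)
    finally show ?thesis .
  qed
  ultimately show ?thesis by simp
qed




lemma mvt_between:
  fixes F F' :: "real \<Rightarrow> real"
  assumes "\<And>x. min a b \<le> x \<Longrightarrow> x \<le> max a b \<Longrightarrow> (F has_real_derivative F' x) (at x)"
  shows "\<exists>z. min a b \<le> z \<and> z \<le> max a b \<and> F b - F a = (b - a) * F' z"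
proof (cases a b rule: linorder_cases)
  case less
  have "\<And>x. a \<le> x \<Longrightarrow> x \<le> b \<Longrightarrow> (F has_real_derivative F' x) (at x)"
    using assms less by simp
  from MVT2[OF less this] obtain z where "a < z" "z < b" "F b - F a = (b - a) * F' z"
    by blast
  then show ?thesis using less by (intro exI[of _ z]) auto
next
  case equal then show ?thesis by (intro exI[of _ a]) auto
next
  case greater
  have "\<And>x. b \<le> x \<Longrightarrow> x \<le> a \<Longrightarrow> (F has_real_derivative F' x) (at x)"
    using assms greater by simp
  from MVT2[OF greater this] obtain z where "b < z" "z < a" "F a - F b = (a - b) * F' z"
    by blast
  then show ?thesis using greater by (intro exI[of _ z]) (auto simp: algebra_simps)
qed

locale phis =
  fixes P P1 P2 P3 :: "real \<Rightarrow> real" and a b :: real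
  assumes dP: "\<And>x. x > 0 \<Longrightarrow> (P has_real_derivative P1 x) (at x)"
    and dP1: "\<And>x. x > 0 \<Longrightarrow> (P1 has_real_derivative P2 x) (at x)"
    and dP2: "\<And>x. x > 0 \<Longrightarrow> (P2 has_real_derivative P3 x) (at x)"
    and sP2: "\<And>x. x > 0 \<Longrightarrow> P2 x \<ge> 0"
    and sP3: "\<And>x. x > 0 \<Longrightarrow> P3 x \<le> 0"
    and b0: "0 \<le> b" and ba: "b < a"
begin

definition Ps :: "real \<Rightarrow> real" where "Ps r = P (a - r) - P a + P1 a * r"
definition Ps' :: "real \<Rightarrow> real" where "Ps' r = - P1 (a - r) + P1 a"
definition C :: real where "C = P2 (a - b)"

lemma P2_anti: "0 < x \<Longrightarrow> x \<le> y \<Longrightarrow> P2 y \<le> P2 x"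
proof -
  assume "0 < x" "x \<le> y"
  obtain z where "min x y \<le> z" "z \<le> max x y" "P2 y - P2 x = (y - x) * P3 z"
    using mvt_between[of x y P2 P3] dP2 \<open>0 < x\<close> \<open>x \<le> y\<close> by fastforce
  moreover have "0 < z" using \<open>0 < x\<close> \<open>x \<le> y\<close> \<open>min x y \<le> z\<close> by (simp add: min_def)
  then have "P3 z \<le> 0" using sP3 by auto
  moreover have "(y - x) * P3 z \<le> 0" using \<open>x \<le> y\<close> \<open>P3 z \<le> 0\<close> by (intro mult_nonneg_nonpos) auto
  ultimately show "P2 y \<le> P2 x" by linarith
qed

lemma C_nonneg: "0 \<le> C" unfolding C_def using sP2 ba by auto

lemma P1_mvt:
  assumes "0 < x" "0 < y"
  shows "\<exists>z. min x y \<le> z \<and> z \<le> max x y \<and> P1 y - P1 x = (y - x) * P2 z"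
  using mvt_between[of x y P1 P2] dP1 assms by fastforce

lemma Ps'_form:
  assumes "\<bar>r\<bar> \<le> b"
  shows "\<exists>z. a - b \<le> z \<and> 0 \<le> P2 z \<and> P2 z \<le> C \<and> Ps' r = r * P2 z"
proof -
  have "0 < a - r" "0 < a" using assms ba b0 by auto
  from P1_mvt[OF this] obtain z where z: "min (a - r) a \<le> z" "z \<le> max (a - r) a" "P1 a - P1 (a - r) = (a - (a - r)) * P2 z"
    by blast
  have "a - b \<le> z" using z assms by auto
  moreover have "0 \<le> P2 z" using sP2 \<open>a - b \<le> z\<close> ba by auto
  moreover have "P2 z \<le> C" unfolding C_def using P2_anti \<open>a - b \<le> z\<close> ba by auto
  moreover have "Ps' r = r * P2 z" using z(3) by (simp add: Ps'_def)
  ultimately show ?thesis by blast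
qed

lemma Ps'_sign: "\<bar>r\<bar> \<le> b \<Longrightarrow> 0 \<le> r * Ps' r"
proof -
  assume "\<bar>r\<bar> \<le> b"
  then obtain z where "0 \<le> P2 z" "Ps' r = r * P2 z" using Ps'_form by blast
  then have eq: "r * Ps' r = (r * r) * P2 z" by simp
  have "0 \<le> (r * r) * P2 z" using \<open>0 \<le> P2 z\<close> by (rule mult_nonneg_nonneg[OF zero_le_square])
  with eq show ?thesis by linarith
qed

lemma Ps'_bound: "\<bar>r\<bar> \<le> b \<Longrightarrow> \<bar>Ps' r\<bar> \<le> C * \<bar>r\<bar>"
proof -
  assume "\<bar>r\<bar> \<le> b"
  then obtain z where "0 \<le> P2 z" "P2 z \<le> C" "Ps' r = r * P2 z" using Ps'_form by blast
  moreover have "\<bar>r\<bar> * P2 z \<le> \<bar>r\<bar> * C" using \<open>P2 z \<le> C\<close> by (intro mult_left_mono) auto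
  ultimately show ?thesis by (simp add: abs_mult mult.commute)
qed

lemma Ps'_mono: "\<bar>x\<bar> \<le> b \<Longrightarrow> \<bar>y\<bar> \<le> b \<Longrightarrow> x \<le> y \<Longrightarrow> Ps' x \<le> Ps' y"
proof -
  assume xy: "\<bar>x\<bar> \<le> b" "\<bar>y\<bar> \<le> b" "x \<le> y"
  have "0 < a - y" "0 < a - x" using xy ba by auto
  from P1_mvt[OF this] obtain z where z: "min (a - y) (a - x) \<le> z" "P1 (a - x) - P1 (a - y) = ((a - x) - (a - y)) * P2 z"
    by blast
  have "P2 z \<ge> 0" using sP2 z(1) xy ba by auto
  moreover have "0 \<le> ((a - x) - (a - y)) * P2 z" using \<open>P2 z \<ge> 0\<close> xy(3) by (intro mult_nonneg_nonneg) auto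
  ultimately show ?thesis using z(2) by (simp add: Ps'_def)
qed

lemma Ps_deriv: "\<bar>r\<bar> \<le> b \<Longrightarrow> (Ps has_real_derivative Ps' r) (at r)"
proof -
  assume "\<bar>r\<bar> \<le> b"
  then have pos: "a - r > 0" using ba by auto
  have g: "((\<lambda>r. a - r) has_real_derivative -1) (at r)" by (auto intro!: derivative_eq_intros)
  have "((\<lambda>r. P (a - r)) has_real_derivative P1 (a - r) * (-1)) (at r)"
    using DERIV_chain2[OF dP[OF pos] g] by simp
  then have "((\<lambda>r. P (a - r) - P a + P1 a * r) has_real_derivative P1 (a - r) * (-1) - 0 + P1 a * 1) (at r)"
    by (intro derivative_intros) auto
  then show ?thesis by (simp add: Ps_def[abs_def] Ps'_def)
qed

lemma Ps_convex:
  assumes "\<bar>r\<bar> \<le> b" "\<bar>t\<bar> \<le> b"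
  shows "Ps r + Ps' r * (t - r) \<le> Ps t"
proof -
  obtain z where z: "min r t \<le> z" "z \<le> max r t" "Ps t - Ps r = (t - r) * Ps' z"
    using mvt_between[of r t Ps Ps'] Ps_deriv assms by fastforce
  have zb: "\<bar>z\<bar> \<le> b" using z assms by auto
  have "0 \<le> (t - r) * (Ps' z - Ps' r)"
  proof (cases "r \<le> t")
    case True
    then have "r \<le> z" using z by auto
    then show ?thesis using Ps'_mono[OF assms(1) zb] True by (simp add: mult_nonneg_nonneg)
  next
    case False
    then have "z \<le> r" using z by auto
    then show ?thesis using Ps'_mono[OF zb assms(1)] False by (simp add: mult_nonpos_nonpos)
  qed
  then show ?thesis using z(3) by (simp add: algebra_simps)
qed

lemma Ps0: "Ps 0 = 0" and Ps'0: "Ps' 0 = 0" by (auto simp: Ps_def Ps'_def)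

lemma Ps_nonneg: "\<bar>r\<bar> \<le> b \<Longrightarrow> 0 \<le> Ps r"
  using Ps_convex[of 0 r] b0 by (simp add: Ps0 Ps'0)

lemma Ps_upper: "\<bar>r\<bar> \<le> b \<Longrightarrow> Ps r \<le> C * r\<^sup>2"
proof -
  assume rb: "\<bar>r\<bar> \<le> b"
  obtain z where z: "min 0 r \<le> z" "z \<le> max 0 r" "Ps r - Ps 0 = (r - 0) * Ps' z"
    using mvt_between[of 0 r Ps Ps'] Ps_deriv rb by fastforce
  have zb: "\<bar>z\<bar> \<le> b" using z rb by auto
  obtain w where w: "0 \<le> P2 w" "P2 w \<le> C" "Ps' z = z * P2 w" using Ps'_form[OF zb] by blast
  have rz: "0 \<le> r * z" "r * z \<le> r\<^sup>2"
  proof -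
    show "0 \<le> r * z" "r * z \<le> r\<^sup>2"
    proof (atomize(full), cases "0 \<le> r")
      case True
      then have "0 \<le> z" "z \<le> r" using z by auto
      then show "0 \<le> r * z \<and> r * z \<le> r\<^sup>2" using True
        by (simp add: power2_eq_square mult_left_mono)
    next
      case False
      then have "r \<le> z" "z \<le> 0" using z by auto
      then show "0 \<le> r * z \<and> r * z \<le> r\<^sup>2" using False
        by (simp add: power2_eq_square mult_left_mono_neg mult_nonpos_nonpos)
    qed
  qed
  have "Ps r = P2 w * (r * z)" using z(3) w(3) by (simp add: Ps0 algebra_simps)
  also have "\<dots> \<le> C * r\<^sup>2" using w rz C_nonneg by (meson mult_mono)
  finally show ?thesis .
qed

lemma P1_mono: "0 < x \<Longrightarrow> x \<le> y \<Longrightarrow> P1 x \<le> P1 y"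
proof -
  assume "0 < x" "x \<le> y"
  obtain z where "min x y \<le> z" "P1 y - P1 x = (y - x) * P2 z"
    using P1_mvt[of x y] \<open>0 < x\<close> \<open>x \<le> y\<close> by auto
  moreover have "0 < z" using \<open>0 < x\<close> \<open>x \<le> y\<close> \<open>min x y \<le> z\<close> by (simp add: min_def)
  then have "P2 z \<ge> 0" using sP2 by auto
  moreover have "0 \<le> (y - x) * P2 z" using \<open>P2 z \<ge> 0\<close> \<open>x \<le> y\<close> by (intro mult_nonneg_nonneg) auto
  ultimately show ?thesis by linarith
qed

end




lemma meas_comp:
  fixes F :: "real \<Rightarrow> real"
  assumes S: "S \<in> sets borel" and F: "continuous_on S F" and h: "h \<in> borel_measurable M"
    and hS: "\<And>x. h x \<in> S"
  shows "(\<lambda>x. F (h x)) \<in> borel_measurable M"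
proof -
  have "(\<lambda>y. indicator S y *\<^sub>R F y) \<in> borel_measurable borel"
    by (rule borel_measurable_continuous_on_indicator[OF S F])
  then have "(\<lambda>x. indicator S (h x) *\<^sub>R F (h x)) \<in> borel_measurable M"
    using measurable_compose[OF h] by blast
  moreover have "(\<lambda>x. indicator S (h x) *\<^sub>R F (h x)) = (\<lambda>x. F (h x))"
    using hS by (auto simp: fun_eq_iff)
  ultimately show ?thesis by simp
qed

lemma wCS:
  fixes u w :: "nat \<Rightarrow> real"
  assumes su: "summable (\<lambda>k. \<bar>u k\<bar>)" and sw: "summable w" and wp: "\<And>k. 0 < w k"
    and sq: "summable (\<lambda>k. (u k)\<^sup>2 / w k)"
  shows "(\<Sum>k. \<bar>u k\<bar>)\<^sup>2 \<le> (\<Sum>k. w k) * (\<Sum>k. (u k)\<^sup>2 / w k)"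
proof -
  have fin: "(\<Sum>k<n. \<bar>u k\<bar>)\<^sup>2 \<le> (\<Sum>k. w k) * (\<Sum>k. (u k)\<^sup>2 / w k)" for n
  proof -
    have eq1: "(\<Sum>k<n. \<bar>u k\<bar>) = (\<Sum>k<n. sqrt (w k) * (\<bar>u k\<bar> / sqrt (w k)))"
    proof (intro sum.cong refl)
      fix k have "0 < w k" by (rule wp)
      then show "\<bar>u k\<bar> = sqrt (w k) * (\<bar>u k\<bar> / sqrt (w k))" by simp
    qed
    have "(\<Sum>k<n. sqrt (w k) * (\<bar>u k\<bar> / sqrt (w k)))\<^sup>2
        \<le> (\<Sum>k<n. (sqrt (w k))\<^sup>2) * (\<Sum>k<n. (\<bar>u k\<bar> / sqrt (w k))\<^sup>2)"
      by (rule Cauchy_Schwarz_ineq_sum)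
    also have "(\<Sum>k<n. (sqrt (w k))\<^sup>2) = (\<Sum>k<n. w k)"
      using wp by (intro sum.cong) (auto simp: less_imp_le)
    also have "(\<Sum>k<n. (\<bar>u k\<bar> / sqrt (w k))\<^sup>2) = (\<Sum>k<n. (u k)\<^sup>2 / w k)"
      using wp by (intro sum.cong) (auto simp: power_divide less_imp_le)
    also have "(\<Sum>k<n. w k) * (\<Sum>k<n. (u k)\<^sup>2 / w k) \<le> (\<Sum>k. w k) * (\<Sum>k. (u k)\<^sup>2 / w k)"
    proof (rule mult_mono)
      show "(\<Sum>k<n. w k) \<le> (\<Sum>k. w k)" by (rule sum_le_suminf[OF sw]) (use wp in \<open>auto simp: less_imp_le\<close>)
      show "(\<Sum>k<n. (u k)\<^sup>2 / w k) \<le> (\<Sum>k. (u k)\<^sup>2 / w k)"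
        by (rule sum_le_suminf[OF sq]) (use wp in \<open>auto simp: less_imp_le\<close>)
      show "0 \<le> (\<Sum>k. w k)" by (rule suminf_nonneg[OF sw]) (use wp in \<open>auto simp: less_imp_le\<close>)
      show "0 \<le> (\<Sum>k<n. (u k)\<^sup>2 / w k)" by (rule sum_nonneg) (use wp in \<open>auto simp: less_imp_le\<close>)
    qed
    finally show ?thesis using eq1 by simp
  qed
  have "(\<lambda>n. (\<Sum>k<n. \<bar>u k\<bar>)\<^sup>2) \<longlonglongrightarrow> (\<Sum>k. \<bar>u k\<bar>)\<^sup>2"
    by (intro tendsto_intros summable_LIMSEQ su)
  then show ?thesis
    by (rule LIMSEQ_le_const2) (use fin in auto)
qed

lemma C0_nonneg: "f \<in> C0 \<Longrightarrow> 0 \<le> f x"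
proof -
  assume "f \<in> C0"
  then have h: "\<forall>x\<ge>0. f x = f (-x) \<and> f x \<ge> 0" unfolding C0_def by blast
  show "0 \<le> f x"
  proof (cases "x \<ge> 0")
    case True then show ?thesis using h[rule_format, of x] by blast
  next
    case False
    then have "-x \<ge> 0" by simp
    then have "f (-x) = f (- (-x)) \<and> f (-x) \<ge> 0" using h[rule_format, of "-x"] by blast
    then show ?thesis by (metis minus_minus)
  qed
qed

lemma C0_sqi: "f \<in> C0 \<Longrightarrow> square_integrable f"
proof -
  assume "f \<in> C0"
  then obtain D R where D0: "D 0 = f" and Dd: "\<And>k x. (D k has_real_derivative D (Suc k) x) (at x)"
    and R: "\<And>x. \<bar>x\<bar> > R \<Longrightarrow> f x = 0"
    unfolding C0_def by blast
  have cont: "continuous_on UNIV f"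
  proof (intro continuous_at_imp_continuous_on ballI)
    fix x show "isCont f x" using DERIV_isCont[OF Dd[of 0 x]] D0 by simp
  qed
  then have [measurable]: "f \<in> borel_measurable lborel"
    using borel_measurable_continuous_onI by simp
  have "compact (f ` {-R..R})"
    by (rule compact_continuous_image) (use cont in \<open>auto intro: continuous_on_subset\<close>)
  then have "bounded (f ` {-R..R})" by (rule compact_imp_bounded)
  then obtain B where "\<forall>y\<in>f ` {-R..R}. norm y \<le> B" unfolding bounded_iff by blast
  then have B: "\<And>x. x \<in> {-R..R} \<Longrightarrow> \<bar>f x\<bar> \<le> B" by auto
  have "integrable lborel (\<lambda>x. indicator {-R..R} x * B\<^sup>2 :: real)"
    by (simp add: integrable_indicator_iff emeasure_lborel_Icc_eq)
  then have "integrable lborel (\<lambda>x. (f x)\<^sup>2)"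
  proof (rule Bochner_Integration.integrable_bound)
    show "(\<lambda>x. (f x)\<^sup>2) \<in> borel_measurable lborel" by measurable
    show "AE x in lborel. norm ((f x)\<^sup>2) \<le> norm (indicator {-R..R} x * B\<^sup>2 :: real)"
    proof (rule AE_I2)
      fix x
      show "norm ((f x)\<^sup>2) \<le> norm (indicator {-R..R} x * B\<^sup>2 :: real)"
      proof (cases "x \<in> {-R..R}")
        case True
        then have "\<bar>f x\<bar> \<le> B" by (rule B)
        then have "(f x)\<^sup>2 \<le> B\<^sup>2" by (metis abs_ge_zero power2_abs power_mono)
        then show ?thesis using True by simp
      next
        case False
        then have "\<bar>x\<bar> > R" by auto
        then show ?thesis using R by simp
      qed
    qed
  qed
  then show ?thesis by (simp add: square_integrable_def)
qed

lemma Ccl_nonneg: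
  assumes "W \<in> Ccl"
  shows "AE x in lborel. 0 \<le> W x"
proof -
  obtain f where f: "\<And>n. f n \<in> C0" and lim: "(\<lambda>n. \<integral>x. (f n x - W x)\<^sup>2 \<partial>lborel) \<longlonglongrightarrow> 0"
    and W: "square_integrable W"
    using assms unfolding Ccl_def by blast
  have [measurable]: "W \<in> borel_measurable lborel" and Wi: "integrable lborel (\<lambda>x. (W x)\<^sup>2)"
    using W by (auto simp: square_integrable_def)
  define Q where "Q = (\<integral>x. indicator {x. W x < 0} x * (W x)\<^sup>2 \<partial>lborel)"
  have Qi: "integrable lborel (\<lambda>x. indicator {x. W x < 0} x * (W x)\<^sup>2)"
    using integrable_mult_indicator[of "{x. W x < 0}" lborel "\<lambda>x. (W x)\<^sup>2"] Wi by simp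
  have Qle: "Q \<le> (\<integral>x. (f n x - W x)\<^sup>2 \<partial>lborel)" for n
  proof -
    have fn: "square_integrable (f n)" by (rule C0_sqi[OF f])
    have [measurable]: "f n \<in> borel_measurable lborel" and fni: "integrable lborel (\<lambda>x. (f n x)\<^sup>2)"
      using fn by (auto simp: square_integrable_def)
    have di: "integrable lborel (\<lambda>x. (f n x - W x)\<^sup>2)"
    proof (rule Bochner_Integration.integrable_bound)
      show "integrable lborel (\<lambda>x. 2 * (f n x)\<^sup>2 + 2 * (W x)\<^sup>2)" using fni Wi by simp
      show "(\<lambda>x. (f n x - W x)\<^sup>2) \<in> borel_measurable lborel" by measurable
      show "AE x in lborel. norm ((f n x - W x)\<^sup>2) \<le> norm (2 * (f n x)\<^sup>2 + 2 * (W x)\<^sup>2)"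
      proof (rule AE_I2)
        fix x
        have "0 \<le> (f n x + W x)\<^sup>2" by simp
        moreover have "2 * (f n x)\<^sup>2 + 2 * (W x)\<^sup>2 - (f n x - W x)\<^sup>2 = (f n x + W x)\<^sup>2"
          by (simp add: power2_eq_square algebra_simps)
        ultimately have e: "(f n x - W x)\<^sup>2 \<le> 2 * (f n x)\<^sup>2 + 2 * (W x)\<^sup>2" by linarith
        have "0 \<le> (f n x - W x)\<^sup>2" by simp
        with e show "norm ((f n x - W x)\<^sup>2) \<le> norm (2 * (f n x)\<^sup>2 + 2 * (W x)\<^sup>2)"
          by simp
      qed
    qed
    show ?thesis unfolding Q_def
    proof (rule integral_mono[OF Qi di])
      fix x
      have "0 \<le> f n x" by (rule C0_nonneg[OF f])
      show "indicator {x. W x < 0} x * (W x)\<^sup>2 \<le> (f n x - W x)\<^sup>2"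
      proof (cases "W x < 0")
        case True
        then have "\<bar>W x\<bar> \<le> \<bar>f n x - W x\<bar>" using \<open>0 \<le> f n x\<close> by auto
        then have "(W x)\<^sup>2 \<le> (f n x - W x)\<^sup>2" by (metis abs_ge_zero power2_abs power_mono)
        then show ?thesis using True by simp
      next
        case False then show ?thesis by simp
      qed
    qed
  qed
  have "Q \<le> 0" by (rule LIMSEQ_le_const[OF lim]) (use Qle in auto)
  moreover have "0 \<le> Q" unfolding Q_def by (rule Bochner_Integration.integral_nonneg) auto
  ultimately have "Q = 0" by simp
  then have "AE x in lborel. indicator {x. W x < 0} x * (W x)\<^sup>2 = 0"
    unfolding Q_def by (subst (asm) integral_nonneg_eq_0_iff_AE[OF Qi]) auto
  then show ?thesis
    by (rule AE_mp) (auto intro!: AE_I2 simp: indicator_def split: if_splits)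
qed




lemma nonneg_Aop_zero:
  assumes f: "square_integrable f" and nn: "AE x in lborel. 0 \<le> f x"
    and z: "AE \<xi> in lborel. Aop m f \<xi> = 0" and m: "m > 0"
  shows "AE x in lborel. f x = 0"
proof -
  have [measurable]: "f \<in> borel_measurable lborel" using f by (simp add: square_integrable_def)
  define c where "c = real m / 2"
  have c0: "0 < c" using m by (simp add: c_def)
  have T: "(\<integral>\<^sup>+\<xi>. (\<integral>\<^sup>+s. indicator {\<xi> - c..\<xi> + c} s * ennreal (f s) \<partial>lborel) \<partial>lborel) = ennreal (2*c) * (\<integral>\<^sup>+s. ennreal (f s) \<partial>lborel)"
    by (rule tonelli_Aop) (use c0 in auto)
  have inner: "(\<integral>\<^sup>+s. indicator {\<xi> - c..\<xi> + c} s * ennreal (f s) \<partial>lborel) = ennreal (Aop m f \<xi>)" for \<xi>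
  proof -
    have si: "integrable lborel (\<lambda>s. indicator {\<xi> - c..\<xi> + c} s * f s)"
      using sqi_loc_int[OF f, of "\<xi> - c" "\<xi> + c"] by (simp add: set_integrable_def)
    have "(\<integral>\<^sup>+s. indicator {\<xi> - c..\<xi> + c} s * ennreal (f s) \<partial>lborel) = (\<integral>\<^sup>+s. ennreal (indicator {\<xi> - c..\<xi> + c} s * f s) \<partial>lborel)"
      by (rule nn_integral_cong) (simp add: ennreal_ind_mult)
    also have "\<dots> = ennreal (\<integral>s. indicator {\<xi> - c..\<xi> + c} s * f s \<partial>lborel)"
    proof (rule nn_integral_eq_integral[OF si])
      show "AE s in lborel. 0 \<le> indicator {\<xi> - c..\<xi> + c} s * f s"
        using nn by eventually_elim (auto simp: indicator_def)
    qed
    finally show ?thesis by (simp add: Aop_eq c_def)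
  qed
  have z': "AE \<xi> in lborel. ennreal (Aop m f \<xi>) = 0" using z by eventually_elim simp
  have "(\<integral>\<^sup>+\<xi>. (\<integral>\<^sup>+s. indicator {\<xi> - c..\<xi> + c} s * ennreal (f s) \<partial>lborel) \<partial>lborel) = (\<integral>\<^sup>+\<xi>. ennreal (Aop m f \<xi>) \<partial>lborel)"
    by (simp only: inner)
  also have "\<dots> = (\<integral>\<^sup>+\<xi>. 0 \<partial>lborel)" using nn_integral_cong_AE[OF z'] by simp
  finally have "(\<integral>\<^sup>+\<xi>. (\<integral>\<^sup>+s. indicator {\<xi> - c..\<xi> + c} s * ennreal (f s) \<partial>lborel) \<partial>lborel) = 0" by simp
  then have "ennreal (2*c) * (\<integral>\<^sup>+s. ennreal (f s) \<partial>lborel) = 0" using T by simp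
  then have "(\<integral>\<^sup>+s. ennreal (f s) \<partial>lborel) = 0" using c0 by simp
  then have "AE x in lborel. ennreal (f x) = 0" by (subst (asm) nn_integral_0_iff_AE) auto
  then show ?thesis using nn by eventually_elim auto
qed

locale S =
  fixes \<Phi> \<Phi>1 \<Phi>2 \<Phi>3 :: "nat \<Rightarrow> real \<Rightarrow> real" and \<nu> K :: real and W :: "real \<Rightarrow> real"
  assumes \<nu>: "\<nu> > 0" and K0: "0 < K" and K1: "K < \<nu>\<^sup>2 / 2"
    and d1: "\<And>m x. x > 0 \<Longrightarrow> (\<Phi> m has_real_derivative \<Phi>1 m x) (at x)"
    and d2: "\<And>m x. x > 0 \<Longrightarrow> (\<Phi>1 m has_real_derivative \<Phi>2 m x) (at x)"
    and d3: "\<And>m x. x > 0 \<Longrightarrow> (\<Phi>2 m has_real_derivative \<Phi>3 m x) (at x)"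
    and sgn: "\<And>m x. m \<ge> 1 \<Longrightarrow> x \<ge> 0 \<Longrightarrow> \<Phi>1 m x \<le> 0 \<and> \<Phi>2 m x \<ge> 0 \<and> \<Phi>3 m x \<le> 0"
    and strict2: "\<And>x. x > 0 \<Longrightarrow> \<Phi>2 1 x > 0"
    and s1: "summable (\<lambda>m. \<Phi>1 (Suc m) (\<nu> * real (Suc m) - sqrt (2 * K * real (Suc m))) * real (Suc m))"
    and s2: "summable (\<lambda>m. \<Phi>2 (Suc m) (\<nu> * real (Suc m) - sqrt (2 * K * real (Suc m))) * (real (Suc m))\<^sup>2)"
    and WC: "W \<in> CK K"
begin

definition bb :: "nat \<Rightarrow> real" where "bb k = sqrt (2 * K * real (Suc k))"
definition CC :: "nat \<Rightarrow> real" where "CC k = \<Phi>2 (Suc k) (\<nu> * real (Suc k) - bb k)"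
definition NN :: real where "NN = sqrt (2 * K)"
definition DD :: "nat \<Rightarrow> real" where "DD k = CC k * (real (Suc k))\<^sup>2 * NN"
definition good :: "(real \<Rightarrow> real) \<Rightarrow> bool" where
  "good f \<longleftrightarrow> square_integrable f \<and> (\<integral>x. (f x)\<^sup>2 \<partial>lborel) = 2 * K"
definition G :: "nat \<Rightarrow> (real \<Rightarrow> real) \<Rightarrow> real \<Rightarrow> real" where
  "G k f s = Psi' \<Phi>1 \<nu> (Suc k) (Aop (Suc k) f s)"
definition U :: "nat \<Rightarrow> (real \<Rightarrow> real) \<Rightarrow> real \<Rightarrow> real" where
  "U k f \<xi> = Aop (Suc k) (G k f) \<xi>"

lemma bb_nonneg: "0 \<le> bb k" unfolding bb_def using K0 by simp

lemma bb_lt: "bb k < \<nu> * real (Suc k)"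
proof -
  have "2 * K * real (Suc k) < \<nu>\<^sup>2 * real (Suc k)" using K1 by simp
  also have "\<dots> \<le> \<nu>\<^sup>2 * (real (Suc k))\<^sup>2"
    by (intro mult_left_mono) (auto simp: power2_eq_square)
  also have "\<dots> = (\<nu> * real (Suc k))\<^sup>2" by (simp add: power_mult_distrib)
  finally show ?thesis unfolding bb_def using \<nu> by (intro real_less_lsqrt) auto
qed

lemma bb_sq: "(bb k)\<^sup>2 = 2 * K * real (Suc k)" unfolding bb_def using K0 by simp

lemma NN_sq: "NN\<^sup>2 = 2 * K" unfolding NN_def using K0 by simp
lemma NN2: "NN * NN = 2 * K" using NN_sq by (simp add: power2_eq_square)
lemma DDNN: "DD k * NN = CC k * ((real (Suc k))\<^sup>2 * (2 * K))"
proof -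
  have "DD k * NN = CC k * (real (Suc k))\<^sup>2 * (NN * NN)" by (simp add: DD_def mult_ac)
  then show ?thesis by (simp add: NN2 mult_ac)
qed
lemma NN_pos: "NN > 0" unfolding NN_def using K0 by simp

lemma bb_le: "bb k \<le> real (Suc k) * NN"
proof -
  have "bb k = sqrt (real (Suc k)) * NN" unfolding bb_def NN_def by (metis mult.commute real_sqrt_mult)
  also have "\<dots> \<le> real (Suc k) * NN"
  proof (rule mult_right_mono)
    have "1 \<le> real (Suc k)" by simp
    then show "sqrt (real (Suc k)) \<le> real (Suc k)" by (intro real_le_lsqrt) (auto simp: power2_eq_square)
  qed (use NN_pos in auto)
  finally show ?thesis .
qed

lemma ph: "phis (\<Phi> (Suc k)) (\<Phi>1 (Suc k)) (\<Phi>2 (Suc k)) (\<Phi>3 (Suc k)) (\<nu> * real (Suc k)) (bb k)"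
proof
  show "\<And>x. 0 < x \<Longrightarrow> (\<Phi> (Suc k) has_real_derivative \<Phi>1 (Suc k) x) (at x)" by (rule d1)
  show "\<And>x. 0 < x \<Longrightarrow> (\<Phi>1 (Suc k) has_real_derivative \<Phi>2 (Suc k) x) (at x)" by (rule d2)
  show "\<And>x. 0 < x \<Longrightarrow> (\<Phi>2 (Suc k) has_real_derivative \<Phi>3 (Suc k) x) (at x)" by (rule d3)
  show "\<And>x. 0 < x \<Longrightarrow> 0 \<le> \<Phi>2 (Suc k) x" using sgn by auto
  show "\<And>x. 0 < x \<Longrightarrow> \<Phi>3 (Suc k) x \<le> 0" using sgn by auto
  show "0 \<le> bb k" by (rule bb_nonneg)
  show "bb k < \<nu> * real (Suc k)" by (rule bb_lt)
qed

lemma Psi_is: "Psi \<Phi> \<Phi>1 \<nu> (Suc k) r = phis.Ps (\<Phi> (Suc k)) (\<Phi>1 (Suc k)) (\<nu> * real (Suc k)) r"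
  by (subst phis.Ps_def[OF ph]) (simp add: Psi_def)

lemma Psi'_is: "Psi' \<Phi>1 \<nu> (Suc k) r = phis.Ps' (\<Phi>1 (Suc k)) (\<nu> * real (Suc k)) r"
  by (subst phis.Ps'_def[OF ph]) (simp add: Psi'_def)

lemma CC_is: "CC k = phis.C (\<Phi>2 (Suc k)) (\<nu> * real (Suc k)) (bb k)"
  by (subst phis.C_def[OF ph]) (simp add: CC_def)


lemma CC_nonneg: "0 \<le> CC k" unfolding CC_is by (rule phis.C_nonneg[OF ph])
lemma DD_nonneg: "0 \<le> DD k" unfolding DD_def using CC_nonneg NN_pos by simp

lemma DD_summable: "summable DD"
proof -
  have "summable (\<lambda>k. CC k * (real (Suc k))\<^sup>2)" using s2 by (simp add: CC_def bb_def)
  then show ?thesis unfolding DD_def by (rule summable_mult2)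
qed

lemma good_sqi: "good f \<Longrightarrow> square_integrable f" by (simp add: good_def)
lemma good_int: "good f \<Longrightarrow> (\<integral>x. (f x)\<^sup>2 \<partial>lborel) = 2 * K" by (simp add: good_def)

lemma Abound: assumes "good f" shows "\<bar>Aop (Suc k) f s\<bar> \<le> bb k"
proof -
  have "(Aop (Suc k) f s)\<^sup>2 \<le> real (Suc k) * (2 * K)"
    using Aop_sq(2)[OF good_sqi[OF assms], of "Suc k" s] good_int[OF assms] by simp
  then have "(Aop (Suc k) f s)\<^sup>2 \<le> (bb k)\<^sup>2" by (simp add: bb_sq mult_ac)
  then have "\<bar>Aop (Suc k) f s\<bar> \<le> \<bar>bb k\<bar>" by (simp add: abs_le_square_iff)
  then show ?thesis using bb_nonneg by simp
qed

lemma arg_pos: assumes "good f" shows "\<nu> * real (Suc k) - Aop (Suc k) f s \<in> {0<..}"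
  using Abound[OF assms, of k s] bb_lt[of k] by auto

lemma cont_Phi: "continuous_on {0<..} (\<Phi> m)"
  by (intro continuous_at_imp_continuous_on ballI DERIV_isCont[OF d1]) auto
lemma cont_Phi1: "continuous_on {0<..} (\<Phi>1 m)"
  by (intro continuous_at_imp_continuous_on ballI DERIV_isCont[OF d2]) auto

lemma G_meas: assumes "good f" shows "G k f \<in> borel_measurable lborel"
proof -
  have [measurable]: "f \<in> borel_measurable lborel" using good_sqi[OF assms] by (simp add: square_integrable_def)
  have [measurable]: "Aop (Suc k) f \<in> borel_measurable lborel" by (rule Aop_meas) simp
  have "(\<lambda>s. \<Phi>1 (Suc k) (\<nu> * real (Suc k) - Aop (Suc k) f s)) \<in> borel_measurable lborel"
    by (rule meas_comp[OF _ cont_Phi1 _ arg_pos[OF assms]]) auto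
  then show ?thesis unfolding G_def[abs_def] Psi'_def by measurable
qed

lemma Psi_meas: assumes "good f" shows "(\<lambda>s. Psi \<Phi> \<Phi>1 \<nu> (Suc k) (Aop (Suc k) f s)) \<in> borel_measurable lborel"
proof -
  have [measurable]: "f \<in> borel_measurable lborel" using good_sqi[OF assms] by (simp add: square_integrable_def)
  have [measurable]: "Aop (Suc k) f \<in> borel_measurable lborel" by (rule Aop_meas) simp
  have "(\<lambda>s. \<Phi> (Suc k) (\<nu> * real (Suc k) - Aop (Suc k) f s)) \<in> borel_measurable lborel"
    by (rule meas_comp[OF _ cont_Phi _ arg_pos[OF assms]]) auto
  then show ?thesis unfolding Psi_def by measurable
qed

lemma G_bound: assumes "good f" shows "\<bar>G k f s\<bar> \<le> CC k * \<bar>Aop (Suc k) f s\<bar>"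
  unfolding G_def Psi'_is CC_is by (rule phis.Ps'_bound[OF ph Abound[OF assms]])

lemma G_sign: assumes "good f" shows "0 \<le> Aop (Suc k) f s * G k f s"
  unfolding G_def Psi'_is by (rule phis.Ps'_sign[OF ph Abound[OF assms]])

lemma G_bound2: assumes "good f" shows "\<bar>G k f s\<bar> \<le> CC k * bb k"
  using G_bound[OF assms, of k s] Abound[OF assms, of k s] CC_nonneg[of k]
  by (meson mult_left_mono order_trans)

lemma G_sqi: assumes "good f"
  shows "square_integrable (G k f)" and "(\<integral>s. (G k f s)\<^sup>2 \<partial>lborel) \<le> (CC k)\<^sup>2 * (real (Suc k))\<^sup>2 * (2 * K)"
proof -
  have f: "square_integrable f" by (rule good_sqi[OF assms])
  have A: "square_integrable (Aop (Suc k) f)" by (rule Aop_L2_sqi[OF f])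
  have [measurable]: "Aop (Suc k) f \<in> borel_measurable lborel" and Ai: "integrable lborel (\<lambda>s. (Aop (Suc k) f s)\<^sup>2)"
    using A by (auto simp: square_integrable_def)
  have [measurable]: "G k f \<in> borel_measurable lborel" by (rule G_meas[OF assms])
  have pt: "(G k f s)\<^sup>2 \<le> (CC k)\<^sup>2 * (Aop (Suc k) f s)\<^sup>2" for s
  proof -
    have "\<bar>G k f s\<bar> \<le> \<bar>CC k * Aop (Suc k) f s\<bar>" using G_bound[OF assms, of k s] CC_nonneg[of k] by (simp add: abs_mult)
    then have "(G k f s)\<^sup>2 \<le> (CC k * Aop (Suc k) f s)\<^sup>2" by (simp add: abs_le_square_iff)
    then show ?thesis by (simp add: power_mult_distrib)
  qed
  have Bi: "integrable lborel (\<lambda>s. (CC k)\<^sup>2 * (Aop (Suc k) f s)\<^sup>2)" using Ai by simp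
  have Gi: "integrable lborel (\<lambda>s. (G k f s)\<^sup>2)"
  proof (rule Bochner_Integration.integrable_bound[OF Bi])
    show "(\<lambda>s. (G k f s)\<^sup>2) \<in> borel_measurable lborel" by measurable
    show "AE s in lborel. norm ((G k f s)\<^sup>2) \<le> norm ((CC k)\<^sup>2 * (Aop (Suc k) f s)\<^sup>2)"
      using pt by (auto intro!: AE_I2)
  qed
  then show "square_integrable (G k f)" by (simp add: square_integrable_def)
  have "(\<integral>s. (G k f s)\<^sup>2 \<partial>lborel) \<le> (\<integral>s. (CC k)\<^sup>2 * (Aop (Suc k) f s)\<^sup>2 \<partial>lborel)"
    by (rule integral_mono[OF Gi Bi pt])
  also have "\<dots> = (CC k)\<^sup>2 * (\<integral>s. (Aop (Suc k) f s)\<^sup>2 \<partial>lborel)" by simp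
  also have "\<dots> \<le> (CC k)\<^sup>2 * ((real (Suc k))\<^sup>2 * (2 * K))"
    using Aop_L2_le[OF f, of "Suc k"] good_int[OF assms] by (intro mult_left_mono) auto
  finally show "(\<integral>s. (G k f s)\<^sup>2 \<partial>lborel) \<le> (CC k)\<^sup>2 * (real (Suc k))\<^sup>2 * (2 * K)" by (simp add: mult_ac)
qed

lemma U_sqi: assumes "good f"
  shows "square_integrable (U k f)" and "(\<integral>s. (U k f s)\<^sup>2 \<partial>lborel) \<le> (DD k)\<^sup>2"
proof -
  show "square_integrable (U k f)" unfolding U_def[abs_def] by (rule Aop_L2_sqi[OF G_sqi(1)[OF assms]])
  have "(\<integral>s. (U k f s)\<^sup>2 \<partial>lborel) \<le> (real (Suc k))\<^sup>2 * (\<integral>s. (G k f s)\<^sup>2 \<partial>lborel)"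
    unfolding U_def by (rule Aop_L2_le[OF G_sqi(1)[OF assms]])
  also have "\<dots> \<le> (real (Suc k))\<^sup>2 * ((CC k)\<^sup>2 * (real (Suc k))\<^sup>2 * (2 * K))"
    by (intro mult_left_mono G_sqi(2)[OF assms]) auto
  also have "\<dots> = (DD k)\<^sup>2" unfolding DD_def by (simp add: power_mult_distrib NN_sq mult_ac)
  finally show "(\<integral>s. (U k f s)\<^sup>2 \<partial>lborel) \<le> (DD k)\<^sup>2" .
qed

lemma U_bound: assumes "good f" shows "\<bar>U k f \<xi>\<bar> \<le> DD k"
proof -
  have "\<bar>U k f \<xi>\<bar> \<le> real (Suc k) * (CC k * bb k)"
    unfolding U_def by (rule Aop_bound[OF G_meas[OF assms] G_bound2[OF assms]])
  also have "\<dots> \<le> real (Suc k) * (CC k * (real (Suc k) * NN))"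
    using bb_le[of k] CC_nonneg[of k] by (intro mult_left_mono) auto
  also have "\<dots> = DD k" unfolding DD_def by (simp add: power2_eq_square mult_ac)
  finally show ?thesis .
qed


lemma dP_eq: "dP \<Phi>1 \<nu> f \<xi> = (\<Sum>k. U k f \<xi>)"
  by (simp add: dP_def U_def[abs_def] G_def[abs_def])

lemma U_meas: assumes "good f" shows "U k f \<in> borel_measurable lborel"
  unfolding U_def[abs_def] by (rule Aop_meas[OF G_meas[OF assms]])

lemma U_summable: assumes "good f"
  shows "summable (\<lambda>k. \<bar>U k f \<xi>\<bar>)" and "summable (\<lambda>k. U k f \<xi>)"
proof -
  show "summable (\<lambda>k. \<bar>U k f \<xi>\<bar>)"
    by (rule summable_comparison_test'[OF DD_summable, of 0]) (use U_bound[OF assms] in auto)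
  then show "summable (\<lambda>k. U k f \<xi>)" by (rule summable_rabs_cancel)
qed

lemma dP_meas: assumes "good f" shows "dP \<Phi>1 \<nu> f \<in> borel_measurable lborel"
proof -
  have [measurable]: "\<And>k. U k f \<in> borel_measurable lborel" by (rule U_meas[OF assms])
  have "(\<lambda>\<xi>. \<Sum>k. U k f \<xi>) \<in> borel_measurable lborel" by measurable
  moreover have "dP \<Phi>1 \<nu> f = (\<lambda>\<xi>. \<Sum>k. U k f \<xi>)" by (simp add: fun_eq_iff dP_eq)
  ultimately show ?thesis by simp
qed

lemma sq_div_le:
  fixes y d w :: real
  assumes "0 \<le> d" "d \<le> w" "0 < w" "y \<le> d\<^sup>2"
  shows "y / w \<le> d"
proof -
  have "y / w \<le> d\<^sup>2 / w" using assms by (intro divide_right_mono) auto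
  also have "d\<^sup>2 \<le> d * w" using assms by (simp add: power2_eq_square mult_left_mono)
  then have "d\<^sup>2 / w \<le> d" using assms by (simp add: divide_le_eq)
  finally show ?thesis .
qed

lemma dP_sqi: assumes "good f" shows "square_integrable (dP \<Phi>1 \<nu> f)"
proof -
  have [measurable]: "\<And>k. U k f \<in> borel_measurable lborel" by (rule U_meas[OF assms])
  have [measurable]: "dP \<Phi>1 \<nu> f \<in> borel_measurable lborel" by (rule dP_meas[OF assms])
  define w where "w k = DD k + (1/2)^k" for k
  have wpos: "0 < w k" for k unfolding w_def using DD_nonneg[of k] by (simp add: add_nonneg_pos)
  have DDw: "DD k \<le> w k" for k unfolding w_def by simp
  have sw: "summable w" unfolding w_def[abs_def]
    by (intro summable_add DD_summable summable_geometric) simp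
  have Ui: "integrable lborel (\<lambda>\<xi>. (U k f \<xi>)\<^sup>2 / w k)" for k
    using U_sqi(1)[OF assms, of k] by (simp add: square_integrable_def)
  have Ule: "(U k f \<xi>)\<^sup>2 \<le> (DD k)\<^sup>2" for k \<xi>
    using U_bound[OF assms, of k \<xi>] DD_nonneg[of k] by (simp add: abs_le_square_iff[symmetric])
  have pt1: "(U k f \<xi>)\<^sup>2 / w k \<le> DD k" for k \<xi>
    by (rule sq_div_le[OF DD_nonneg DDw wpos Ule])
  have sq: "summable (\<lambda>k. (U k f \<xi>)\<^sup>2 / w k)" for \<xi>
    by (rule summable_comparison_test'[OF DD_summable, of 0]) (use pt1 wpos in \<open>auto simp: less_imp_le\<close>)
  have int: "integrable lborel (\<lambda>\<xi>. \<Sum>k. (U k f \<xi>)\<^sup>2 / w k)"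
  proof (rule integrable_suminf)
    show "\<And>k. integrable lborel (\<lambda>\<xi>. (U k f \<xi>)\<^sup>2 / w k)" by (rule Ui)
    show "AE \<xi> in lborel. summable (\<lambda>k. norm ((U k f \<xi>)\<^sup>2 / w k))"
      using sq wpos by (auto intro!: AE_I2 simp: less_imp_le)
    show "summable (\<lambda>k. \<integral>\<xi>. norm ((U k f \<xi>)\<^sup>2 / w k) \<partial>lborel)"
    proof (rule summable_comparison_test'[OF DD_summable, of 0])
      fix k
      have "(\<integral>\<xi>. norm ((U k f \<xi>)\<^sup>2 / w k) \<partial>lborel) = (\<integral>\<xi>. (U k f \<xi>)\<^sup>2 \<partial>lborel) / w k"
        using wpos[of k] by (simp add: less_imp_le)
      also have "\<dots> \<le> DD k"
        by (rule sq_div_le[OF DD_nonneg DDw wpos U_sqi(2)[OF assms]])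
      finally show "norm (\<integral>\<xi>. norm ((U k f \<xi>)\<^sup>2 / w k) \<partial>lborel) \<le> DD k" by simp
    qed
  qed
  have pt: "(dP \<Phi>1 \<nu> f \<xi>)\<^sup>2 \<le> (\<Sum>k. w k) * (\<Sum>k. (U k f \<xi>)\<^sup>2 / w k)" for \<xi>
  proof -
    have "\<bar>dP \<Phi>1 \<nu> f \<xi>\<bar> \<le> (\<Sum>k. \<bar>U k f \<xi>\<bar>)"
      unfolding dP_eq by (rule summable_rabs[OF U_summable(1)[OF assms]])
    then have "(dP \<Phi>1 \<nu> f \<xi>)\<^sup>2 \<le> (\<Sum>k. \<bar>U k f \<xi>\<bar>)\<^sup>2"
      by (metis abs_ge_zero power2_abs power_mono)
    also have "\<dots> \<le> (\<Sum>k. w k) * (\<Sum>k. (U k f \<xi>)\<^sup>2 / w k)"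
      by (rule wCS[OF U_summable(1)[OF assms] sw wpos sq])
    finally show ?thesis .
  qed
  have "integrable lborel (\<lambda>\<xi>. (dP \<Phi>1 \<nu> f \<xi>)\<^sup>2)"
  proof (rule Bochner_Integration.integrable_bound)
    show "integrable lborel (\<lambda>\<xi>. (\<Sum>k. w k) * (\<Sum>k. (U k f \<xi>)\<^sup>2 / w k))" using int by simp
    show "(\<lambda>\<xi>. (dP \<Phi>1 \<nu> f \<xi>)\<^sup>2) \<in> borel_measurable lborel" by measurable
    show "AE \<xi> in lborel. norm ((dP \<Phi>1 \<nu> f \<xi>)\<^sup>2) \<le> norm ((\<Sum>k. w k) * (\<Sum>k. (U k f \<xi>)\<^sup>2 / w k))"
      using pt by (auto intro!: AE_I2 order_trans[OF _ abs_ge_self])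
  qed
  then show ?thesis by (simp add: square_integrable_def)
qed


lemma inner: assumes "good f" and h: "square_integrable h"
  shows "summable (\<lambda>k. \<integral>s. G k f s * Aop (Suc k) h s \<partial>lborel)"
    and "(\<integral>\<xi>. dP \<Phi>1 \<nu> f \<xi> * h \<xi> \<partial>lborel) = (\<Sum>k. \<integral>s. G k f s * Aop (Suc k) h s \<partial>lborel)"
proof -
  have [measurable]: "h \<in> borel_measurable lborel" using h by (simp add: square_integrable_def)
  define H where "H = (\<integral>x. (h x)\<^sup>2 \<partial>lborel)"
  have H0: "0 \<le> H" unfolding H_def by simp
  have Vi: "integrable lborel (\<lambda>\<xi>. U k f \<xi> * h \<xi>)" for k
    by (rule sqi_prod_int[OF U_sqi(1)[OF assms(1)] h])
  have Vabs: "(\<integral>\<xi>. norm (U k f \<xi> * h \<xi>) \<partial>lborel) \<le> DD k * sqrt H" for k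
  proof -
    have "(\<integral>\<xi>. \<bar>U k f \<xi>\<bar> * \<bar>h \<xi>\<bar> \<partial>lborel)\<^sup>2 \<le> (\<integral>\<xi>. \<bar>U k f \<xi>\<bar>\<^sup>2 \<partial>lborel) * (\<integral>\<xi>. \<bar>h \<xi>\<bar>\<^sup>2 \<partial>lborel)"
      by (rule sqi_prod_le[OF sqi_abs[OF U_sqi(1)[OF assms(1)]] sqi_abs[OF h]])
    also have "\<dots> = (\<integral>\<xi>. (U k f \<xi>)\<^sup>2 \<partial>lborel) * H" by (simp add: H_def)
    also have "\<dots> \<le> (DD k)\<^sup>2 * H" by (intro mult_right_mono U_sqi(2)[OF assms(1)] H0)
    also have "\<dots> = (DD k * sqrt H)\<^sup>2" using H0 by (simp add: power_mult_distrib)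
    finally have "(\<integral>\<xi>. \<bar>U k f \<xi>\<bar> * \<bar>h \<xi>\<bar> \<partial>lborel) \<le> DD k * sqrt H"
      by (rule power2_le_imp_le) (use DD_nonneg H0 in simp)
    then show ?thesis by (simp add: abs_mult)
  qed
  have sumV: "summable (\<lambda>k. \<integral>\<xi>. norm (U k f \<xi> * h \<xi>) \<partial>lborel)"
  proof (rule summable_comparison_test'[where N=0])
    show "summable (\<lambda>k. DD k * sqrt H)" by (rule summable_mult2[OF DD_summable])
    fix k show "norm (\<integral>\<xi>. norm (U k f \<xi> * h \<xi>) \<partial>lborel) \<le> DD k * sqrt H" using Vabs[of k] by simp
  qed
  have aeV: "AE \<xi> in lborel. summable (\<lambda>k. norm (U k f \<xi> * h \<xi>))"
  proof (rule AE_I2)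
    fix \<xi>
    show "summable (\<lambda>k. norm (U k f \<xi> * h \<xi>))"
    proof (rule summable_comparison_test'[where N=0])
      show "summable (\<lambda>k. DD k * \<bar>h \<xi>\<bar>)" by (rule summable_mult2[OF DD_summable])
      fix k show "norm (norm (U k f \<xi> * h \<xi>)) \<le> DD k * \<bar>h \<xi>\<bar>"
        using U_bound[OF assms(1), of k \<xi>] by (simp add: abs_mult mult_right_mono)
    qed
  qed
  have adj: "(\<integral>\<xi>. U k f \<xi> * h \<xi> \<partial>lborel) = (\<integral>s. G k f s * Aop (Suc k) h s \<partial>lborel)" for k
    unfolding U_def by (rule Aop_adj[OF h G_sqi(1)[OF assms(1)]])
  have "summable (\<lambda>k. \<integral>\<xi>. U k f \<xi> * h \<xi> \<partial>lborel)"
    by (rule summable_integral[OF Vi aeV sumV])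
  then show "summable (\<lambda>k. \<integral>s. G k f s * Aop (Suc k) h s \<partial>lborel)" by (simp add: adj)
  have "(\<integral>\<xi>. dP \<Phi>1 \<nu> f \<xi> * h \<xi> \<partial>lborel) = (\<integral>\<xi>. (\<Sum>k. U k f \<xi> * h \<xi>) \<partial>lborel)"
    by (rule Bochner_Integration.integral_cong) (auto simp: dP_eq suminf_mult2[OF U_summable(2)[OF assms(1)]])
  also have "\<dots> = (\<Sum>k. \<integral>\<xi>. U k f \<xi> * h \<xi> \<partial>lborel)"
    by (rule integral_suminf[OF Vi aeV sumV])
  finally show "(\<integral>\<xi>. dP \<Phi>1 \<nu> f \<xi> * h \<xi> \<partial>lborel) = (\<Sum>k. \<integral>s. G k f s * Aop (Suc k) h s \<partial>lborel)"
    by (simp add: adj)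
qed

lemma Pfun_eq: assumes "good f"
  shows "summable (\<lambda>k. \<integral>s. Psi \<Phi> \<Phi>1 \<nu> (Suc k) (Aop (Suc k) f s) \<partial>lborel)"
    and "Pfun \<Phi> \<Phi>1 \<nu> f = (\<Sum>k. \<integral>s. Psi \<Phi> \<Phi>1 \<nu> (Suc k) (Aop (Suc k) f s) \<partial>lborel)"
proof -
  define Pk where "Pk k s = Psi \<Phi> \<Phi>1 \<nu> (Suc k) (Aop (Suc k) f s)" for k s
  have f: "square_integrable f" by (rule good_sqi[OF assms])
  have [measurable]: "Pk k \<in> borel_measurable lborel" for k
    unfolding Pk_def[abs_def] by (rule Psi_meas[OF assms])
  have Pnn: "0 \<le> Pk k s" for k s
    unfolding Pk_def Psi_is by (rule phis.Ps_nonneg[OF ph Abound[OF assms]])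
  have Pup: "Pk k s \<le> CC k * (Aop (Suc k) f s)\<^sup>2" for k s
    unfolding Pk_def Psi_is CC_is by (rule phis.Ps_upper[OF ph Abound[OF assms]])
  have Ai: "integrable lborel (\<lambda>s. (Aop (Suc k) f s)\<^sup>2)" for k
    using Aop_L2_sqi[OF f, of "Suc k"] by (simp add: square_integrable_def)
  have Pi: "integrable lborel (Pk k)" for k
  proof (rule Bochner_Integration.integrable_bound)
    show "integrable lborel (\<lambda>s. CC k * (Aop (Suc k) f s)\<^sup>2)" using Ai by simp
    show "Pk k \<in> borel_measurable lborel" by simp
    show "AE s in lborel. norm (Pk k s) \<le> norm (CC k * (Aop (Suc k) f s)\<^sup>2)"
      using Pnn Pup by (auto intro!: AE_I2 order_trans[OF _ abs_ge_self])
  qed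
  have pt: "norm (Pk k s) \<le> DD k * NN" for k s
  proof -
    have "Pk k s \<le> CC k * (Aop (Suc k) f s)\<^sup>2" by (rule Pup)
    also have "\<dots> \<le> CC k * (bb k)\<^sup>2"
      using Abound[OF assms, of k s] CC_nonneg[of k]
      by (intro mult_left_mono) (auto simp: abs_le_square_iff[symmetric] bb_nonneg)
    also have "\<dots> = CC k * (2 * K * real (Suc k))" by (simp add: bb_sq)
    also have "\<dots> \<le> CC k * (2 * K * (real (Suc k))\<^sup>2)"
      using CC_nonneg[of k] K0 by (intro mult_left_mono) (auto simp: power2_eq_square)
    also have "\<dots> = DD k * NN" unfolding DDNN by (simp only: mult_ac)
    finally show ?thesis using Pnn[of k s] by simp
  qed
  have aeP: "AE s in lborel. summable (\<lambda>k. norm (Pk k s))"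
    by (intro AE_I2 summable_comparison_test'[where N=0, OF summable_mult2[OF DD_summable]] ) (use pt in auto)
  have sumP: "summable (\<lambda>k. \<integral>s. norm (Pk k s) \<partial>lborel)"
  proof (rule summable_comparison_test'[where N=0, OF summable_mult2[OF DD_summable, of NN]])
    fix k
    have "(\<integral>s. norm (Pk k s) \<partial>lborel) = (\<integral>s. Pk k s \<partial>lborel)" using Pnn by simp
    also have "\<dots> \<le> (\<integral>s. CC k * (Aop (Suc k) f s)\<^sup>2 \<partial>lborel)"
      by (rule integral_mono[OF Pi _ Pup]) (use Ai in simp)
    also have "\<dots> = CC k * (\<integral>s. (Aop (Suc k) f s)\<^sup>2 \<partial>lborel)" by simp
    also have "\<dots> \<le> CC k * ((real (Suc k))\<^sup>2 * (2 * K))"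
      using Aop_L2_le[OF f, of "Suc k"] good_int[OF assms] CC_nonneg[of k] by (intro mult_left_mono) auto
    also have "\<dots> = DD k * NN" by (simp add: DDNN)
    finally show "norm (\<integral>s. norm (Pk k s) \<partial>lborel) \<le> DD k * NN"
      using Pnn by (simp add: Bochner_Integration.integral_nonneg)
  qed
  show "summable (\<lambda>k. \<integral>s. Psi \<Phi> \<Phi>1 \<nu> (Suc k) (Aop (Suc k) f s) \<partial>lborel)"
    using summable_integral[OF Pi aeP sumP] by (simp add: Pk_def)
  show "Pfun \<Phi> \<Phi>1 \<nu> f = (\<Sum>k. \<integral>s. Psi \<Phi> \<Phi>1 \<nu> (Suc k) (Aop (Suc k) f s) \<partial>lborel)"
    using integral_suminf[OF Pi aeP sumP] by (simp add: Pk_def Pfun_def)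
qed


lemma Psi_int: assumes "good f"
  shows "integrable lborel (\<lambda>s. Psi \<Phi> \<Phi>1 \<nu> (Suc k) (Aop (Suc k) f s))"
proof (rule Bochner_Integration.integrable_bound)
  have f: "square_integrable f" by (rule good_sqi[OF assms])
  show "integrable lborel (\<lambda>s. CC k * (Aop (Suc k) f s)\<^sup>2)"
    using Aop_L2_sqi[OF f, of "Suc k"] by (simp add: square_integrable_def)
  show "(\<lambda>s. Psi \<Phi> \<Phi>1 \<nu> (Suc k) (Aop (Suc k) f s)) \<in> borel_measurable lborel" by (rule Psi_meas[OF assms])
  have Pnn: "0 \<le> Psi \<Phi> \<Phi>1 \<nu> (Suc k) (Aop (Suc k) f s)" for s
    unfolding Psi_is by (rule phis.Ps_nonneg[OF ph Abound[OF assms]])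
  have Pup: "Psi \<Phi> \<Phi>1 \<nu> (Suc k) (Aop (Suc k) f s) \<le> CC k * (Aop (Suc k) f s)\<^sup>2" for s
    unfolding Psi_is CC_is by (rule phis.Ps_upper[OF ph Abound[OF assms]])
  show "AE s in lborel. norm (Psi \<Phi> \<Phi>1 \<nu> (Suc k) (Aop (Suc k) f s)) \<le> norm (CC k * (Aop (Suc k) f s)\<^sup>2)"
    using Pnn Pup by (auto intro!: AE_I2 order_trans[OF _ abs_ge_self])
qed

lemma W_sqi: "square_integrable W" using WC by (simp add: CK_def Ccl_def)
lemma W_int: "(\<integral>x. (W x)\<^sup>2 \<partial>lborel) = 2 * K"
proof -
  have "(1/2) * (L2norm W)\<^sup>2 = K" using WC by (simp add: CK_def)
  moreover have "(L2norm W)\<^sup>2 = (\<integral>x. (W x)\<^sup>2 \<partial>lborel)" unfolding L2norm_def by simp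
  ultimately show ?thesis by simp
qed
lemma W_good: "good W" using W_sqi W_int by (simp add: good_def)
lemma L2W: "L2norm W = NN" unfolding L2norm_def NN_def W_int ..

abbreviation "D \<equiv> dP \<Phi>1 \<nu> W"
definition ID :: real where "ID = (\<integral>x. (D x)\<^sup>2 \<partial>lborel)"

lemma D_sqi: "square_integrable D" by (rule dP_sqi[OF W_good])
lemma D_meas[measurable]: "D \<in> borel_measurable lborel" by (rule dP_meas[OF W_good])
lemma W_meas[measurable]: "W \<in> borel_measurable lborel" using W_sqi by (simp add: square_integrable_def)
lemma ID_nonneg: "0 \<le> ID" unfolding ID_def by simp
lemma LD_eq: "L2norm D = sqrt ID" unfolding L2norm_def ID_def ..

lemma strict_one:
  assumes "\<bar>r\<bar> \<le> bb 0" "r \<noteq> 0"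
  shows "0 < r * Psi' \<Phi>1 \<nu> (Suc 0) r"
proof -
  obtain z where z: "\<nu> * real (Suc 0) - bb 0 \<le> z" "Psi' \<Phi>1 \<nu> (Suc 0) r = r * \<Phi>2 (Suc 0) z"
    using phis.Ps'_form[OF ph[of 0] assms(1)] unfolding Psi'_is by blast
  have "0 < z" using z(1) bb_lt[of 0] by simp
  then have "0 < \<Phi>2 1 z" by (rule strict2)
  moreover have "0 < r * r" using assms(2) not_real_square_gt_zero by blast
  ultimately have "0 < (r * r) * \<Phi>2 1 z" by simp
  then show ?thesis using z(2) by (simp add: mult.assoc)
qed

lemma ID_pos: "0 < ID"
proof (rule ccontr)
  assume "\<not> 0 < ID"
  then have "ID = 0" using ID_nonneg by simp
  have Di: "integrable lborel (\<lambda>x. (D x)\<^sup>2)" using D_sqi by (simp add: square_integrable_def)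
  have "AE x in lborel. (D x)\<^sup>2 = 0"
    using \<open>ID = 0\<close> unfolding ID_def by (subst (asm) integral_nonneg_eq_0_iff_AE[OF Di]) auto
  then have aeD: "AE x in lborel. D x * W x = 0" by eventually_elim simp
  have "(\<integral>x. D x * W x \<partial>lborel) = (\<integral>x. 0 \<partial>(lborel::real measure))"
    by (rule integral_cong_AE) (use aeD in auto)
  then have sum0: "(\<Sum>k. \<integral>s. G k W s * Aop (Suc k) W s \<partial>lborel) = 0"
    using inner(2)[OF W_good W_sqi] by simp
  have Tnn: "0 \<le> (\<integral>s. G k W s * Aop (Suc k) W s \<partial>lborel)" for k
    by (rule Bochner_Integration.integral_nonneg) (use G_sign[OF W_good] in \<open>simp add: mult.commute\<close>)
  have "\<forall>k. (\<integral>s. G k W s * Aop (Suc k) W s \<partial>lborel) = 0"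
    using sum0 suminf_eq_zero_iff[OF inner(1)[OF W_good W_sqi] Tnn] by simp
  then have T0: "(\<integral>s. G 0 W s * Aop (Suc 0) W s \<partial>lborel) = 0" by blast
  have Ti: "integrable lborel (\<lambda>s. G 0 W s * Aop (Suc 0) W s)"
    by (rule sqi_prod_int[OF G_sqi(1)[OF W_good] Aop_L2_sqi[OF W_sqi]])
  have "AE s in lborel. G 0 W s * Aop (Suc 0) W s = 0"
    using T0 by (subst (asm) integral_nonneg_eq_0_iff_AE[OF Ti]) (use G_sign[OF W_good] in \<open>auto simp: mult.commute\<close>)
  then have aeA: "AE s in lborel. Aop (Suc 0) W s = 0"
  proof (rule AE_mp, intro AE_I2 impI)
    fix s assume h: "G 0 W s * Aop (Suc 0) W s = 0"
    show "Aop (Suc 0) W s = 0"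
    proof (rule ccontr)
      assume "Aop (Suc 0) W s \<noteq> 0"
      then have "0 < Aop (Suc 0) W s * Psi' \<Phi>1 \<nu> (Suc 0) (Aop (Suc 0) W s)"
        by (intro strict_one Abound[OF W_good])
      moreover have "Aop (Suc 0) W s * Psi' \<Phi>1 \<nu> (Suc 0) (Aop (Suc 0) W s) = 0"
        using h by (simp only: G_def mult.commute)
      ultimately show False by simp
    qed
  qed
  have "AE x in lborel. W x = 0"
    by (rule nonneg_Aop_zero[OF W_sqi Ccl_nonneg aeA]) (use WC in \<open>auto simp: CK_def\<close>)
  then have "AE x in lborel. (W x)\<^sup>2 = 0" by eventually_elim simp
  then have "(\<integral>x. (W x)\<^sup>2 \<partial>lborel) = (\<integral>x. 0 \<partial>(lborel::real measure))"
    by (intro integral_cong_AE) auto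
  then show False using W_int K0 by simp
qed

definition mu :: real where "mu = NN / sqrt ID"
lemma mu_is: "muW \<Phi>1 \<nu> W = mu" unfolding muW_def mu_def L2W LD_eq ..
lemma mu_pos: "0 < mu" unfolding mu_def using NN_pos ID_pos by simp
lemma Top_is: "Top \<Phi>1 \<nu> W = (\<lambda>\<xi>. mu * D \<xi>)" unfolding Top_def mu_is ..

lemma TW_good: "good (Top \<Phi>1 \<nu> W)"
proof -
  have Di: "integrable lborel (\<lambda>x. (D x)\<^sup>2)" using D_sqi by (simp add: square_integrable_def)
  have "square_integrable (\<lambda>\<xi>. mu * D \<xi>)"
    unfolding square_integrable_def using Di by (simp add: power_mult_distrib)
  moreover have "(\<integral>x. (mu * D x)\<^sup>2 \<partial>lborel) = 2 * K"
  proof -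
    have "(\<integral>x. (mu * D x)\<^sup>2 \<partial>lborel) = mu\<^sup>2 * ID" unfolding ID_def by (simp add: power_mult_distrib)
    also have "\<dots> = NN\<^sup>2" unfolding mu_def using ID_pos by (simp add: power_divide)
    finally show ?thesis by (simp add: NN_sq)
  qed
  ultimately show ?thesis unfolding good_def Top_is by simp
qed

lemma DTW: "(\<integral>x. D x * Top \<Phi>1 \<nu> W x \<partial>lborel) = NN * sqrt ID"
proof -
  have "(\<integral>x. D x * Top \<Phi>1 \<nu> W x \<partial>lborel) = (\<integral>x. mu * (D x)\<^sup>2 \<partial>lborel)"
    unfolding Top_is by (simp add: power2_eq_square mult_ac)
  also have "\<dots> = mu * ID" unfolding ID_def by simp
  also have "\<dots> = NN * sqrt ID"
  proof -
    have s: "ID = sqrt ID * sqrt ID" using ID_nonneg by simp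
    have p: "0 < sqrt ID" using ID_pos by simp
    have "mu * ID = NN / sqrt ID * (sqrt ID * sqrt ID)" unfolding mu_def by (subst s) (rule refl)
    also have "\<dots> = NN * sqrt ID" using p by (simp add: field_simps)
    finally show ?thesis .
  qed
  finally show ?thesis .
qed

lemma DW_le: "(\<integral>x. D x * W x \<partial>lborel) \<le> NN * sqrt ID"
proof -
  have "(\<integral>x. D x * W x \<partial>lborel)\<^sup>2 \<le> (\<integral>x. (D x)\<^sup>2 \<partial>lborel) * (\<integral>x. (W x)\<^sup>2 \<partial>lborel)"
    by (rule sqi_prod_le[OF D_sqi W_sqi])
  then have a: "(\<integral>x. D x * W x \<partial>lborel)\<^sup>2 \<le> ID * (2 * K)" by (simp only: ID_def[symmetric] W_int)
  have b: "(NN * sqrt ID)\<^sup>2 = ID * (2 * K)"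
    by (simp only: power_mult_distrib NN_sq real_sqrt_pow2[OF ID_nonneg] mult.commute)
  have "\<bar>\<integral>x. D x * W x \<partial>lborel\<bar>\<^sup>2 \<le> (NN * sqrt ID)\<^sup>2" using a b by simp
  then have "\<bar>\<integral>x. D x * W x \<partial>lborel\<bar> \<le> NN * sqrt ID"
    by (rule power2_le_imp_le) (use NN_pos ID_nonneg in simp)
  then show ?thesis by simp
qed

lemma main_ineq: "Pfun \<Phi> \<Phi>1 \<nu> (Top \<Phi>1 \<nu> W) - Pfun \<Phi> \<Phi>1 \<nu> W \<ge>
    (\<integral>x. D x * Top \<Phi>1 \<nu> W x \<partial>lborel) - (\<integral>x. D x * W x \<partial>lborel)"
proof -
  define T where "T = Top \<Phi>1 \<nu> W"
  have Tg: "good T" unfolding T_def by (rule TW_good)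
  have Ts: "square_integrable T" by (rule good_sqi[OF Tg])
  define a where "a k = (\<integral>s. Psi \<Phi> \<Phi>1 \<nu> (Suc k) (Aop (Suc k) T s) \<partial>lborel)" for k
  define b where "b k = (\<integral>s. Psi \<Phi> \<Phi>1 \<nu> (Suc k) (Aop (Suc k) W s) \<partial>lborel)" for k
  define c where "c k = (\<integral>s. G k W s * Aop (Suc k) T s \<partial>lborel)" for k
  define d where "d k = (\<integral>s. G k W s * Aop (Suc k) W s \<partial>lborel)" for k
  have sa: "summable a" unfolding a_def by (rule Pfun_eq(1)[OF Tg])
  have sb: "summable b" unfolding b_def by (rule Pfun_eq(1)[OF W_good])
  have sc: "summable c" unfolding c_def by (rule inner(1)[OF W_good Ts])
  have sd: "summable d" unfolding d_def by (rule inner(1)[OF W_good W_sqi])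
  have le: "c k - d k \<le> a k - b k" for k
  proof -
    have i1: "integrable lborel (\<lambda>s. G k W s * Aop (Suc k) T s)"
      by (rule sqi_prod_int[OF G_sqi(1)[OF W_good] Aop_L2_sqi[OF Ts]])
    have i2: "integrable lborel (\<lambda>s. G k W s * Aop (Suc k) W s)"
      by (rule sqi_prod_int[OF G_sqi(1)[OF W_good] Aop_L2_sqi[OF W_sqi]])
    have i3: "integrable lborel (\<lambda>s. Psi \<Phi> \<Phi>1 \<nu> (Suc k) (Aop (Suc k) T s))" by (rule Psi_int[OF Tg])
    have i4: "integrable lborel (\<lambda>s. Psi \<Phi> \<Phi>1 \<nu> (Suc k) (Aop (Suc k) W s))" by (rule Psi_int[OF W_good])
    have "(\<integral>s. Psi \<Phi> \<Phi>1 \<nu> (Suc k) (Aop (Suc k) W s) + (G k W s * Aop (Suc k) T s - G k W s * Aop (Suc k) W s) \<partial>lborel)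
        \<le> (\<integral>s. Psi \<Phi> \<Phi>1 \<nu> (Suc k) (Aop (Suc k) T s) \<partial>lborel)"
    proof (rule integral_mono)
      show "integrable lborel (\<lambda>s. Psi \<Phi> \<Phi>1 \<nu> (Suc k) (Aop (Suc k) W s) + (G k W s * Aop (Suc k) T s - G k W s * Aop (Suc k) W s))"
        using i1 i2 i4 by simp
      show "integrable lborel (\<lambda>s. Psi \<Phi> \<Phi>1 \<nu> (Suc k) (Aop (Suc k) T s))" by (rule i3)
      fix s
      have "Psi \<Phi> \<Phi>1 \<nu> (Suc k) (Aop (Suc k) W s) + Psi' \<Phi>1 \<nu> (Suc k) (Aop (Suc k) W s) * (Aop (Suc k) T s - Aop (Suc k) W s)
          \<le> Psi \<Phi> \<Phi>1 \<nu> (Suc k) (Aop (Suc k) T s)"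
        unfolding Psi_is Psi'_is by (rule phis.Ps_convex[OF ph Abound[OF W_good] Abound[OF Tg]])
      then show "Psi \<Phi> \<Phi>1 \<nu> (Suc k) (Aop (Suc k) W s) + (G k W s * Aop (Suc k) T s - G k W s * Aop (Suc k) W s)
          \<le> Psi \<Phi> \<Phi>1 \<nu> (Suc k) (Aop (Suc k) T s)"
        by (simp add: G_def algebra_simps)
    qed
    then have "b k + (c k - d k) \<le> a k" unfolding a_def b_def c_def d_def using i1 i2 i4 by simp
    then show ?thesis by simp
  qed
  have "(\<Sum>k. c k - d k) \<le> (\<Sum>k. a k - b k)"
    by (rule suminf_le[OF le summable_diff[OF sc sd] summable_diff[OF sa sb]])
  moreover have "(\<Sum>k. c k - d k) = (\<integral>x. D x * T x \<partial>lborel) - (\<integral>x. D x * W x \<partial>lborel)"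
  proof -
    have "(\<Sum>k. c k - d k) = (\<Sum>k. c k) - (\<Sum>k. d k)" by (rule suminf_diff[OF sc sd, symmetric])
    then show ?thesis unfolding c_def d_def using inner(2)[OF W_good Ts] inner(2)[OF W_good W_sqi] by simp
  qed
  moreover have "(\<Sum>k. a k - b k) = Pfun \<Phi> \<Phi>1 \<nu> T - Pfun \<Phi> \<Phi>1 \<nu> W"
  proof -
    have "(\<Sum>k. a k - b k) = (\<Sum>k. a k) - (\<Sum>k. b k)" by (rule suminf_diff[OF sa sb, symmetric])
    then show ?thesis unfolding a_def b_def using Pfun_eq(2)[OF Tg] Pfun_eq(2)[OF W_good] by simp
  qed
  ultimately show ?thesis unfolding T_def by simp
qed


lemma ineq: "Pfun \<Phi> \<Phi>1 \<nu> W \<le> Pfun \<Phi> \<Phi>1 \<nu> (Top \<Phi>1 \<nu> W)"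
  using main_ineq DTW DW_le by simp

lemma eq_imp:
  assumes "Pfun \<Phi> \<Phi>1 \<nu> (Top \<Phi>1 \<nu> W) = Pfun \<Phi> \<Phi>1 \<nu> W"
  shows "AE x in lborel. W x = Top \<Phi>1 \<nu> W x"
proof -
  define L where "L = sqrt ID"
  have Lp: "0 < L" unfolding L_def using ID_pos by simp
  have L2: "L * L = ID" unfolding L_def using ID_nonneg by simp
  have ge: "NN * L \<le> (\<integral>x. D x * W x \<partial>lborel)" using main_ineq DTW assms unfolding L_def by simp
  have Wi: "integrable lborel (\<lambda>x. (W x)\<^sup>2)" using W_sqi by (simp add: square_integrable_def)
  have Di: "integrable lborel (\<lambda>x. (D x)\<^sup>2)" using D_sqi by (simp add: square_integrable_def)
  have DWi: "integrable lborel (\<lambda>x. D x * W x)" by (rule sqi_prod_int[OF D_sqi W_sqi])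
  have eqf: "(\<lambda>x. (L * W x - NN * D x)\<^sup>2) = (\<lambda>x. (L * L) * (W x)\<^sup>2 - (2 * L * NN) * (D x * W x) + (NN * NN) * (D x)\<^sup>2)"
    by (auto simp: fun_eq_iff power2_eq_square algebra_simps)
  have Xi: "integrable lborel (\<lambda>x. (L * W x - NN * D x)\<^sup>2)" unfolding eqf using Wi Di DWi by simp
  have "(\<integral>x. (L * W x - NN * D x)\<^sup>2 \<partial>lborel)
      = (L * L) * (\<integral>x. (W x)\<^sup>2 \<partial>lborel) - (2 * L * NN) * (\<integral>x. D x * W x \<partial>lborel) + (NN * NN) * ID"
    unfolding eqf ID_def using Wi Di DWi by simp
  also have "\<dots> = 2 * (L * NN) * (L * NN - (\<integral>x. D x * W x \<partial>lborel))"
    unfolding W_int L2[symmetric] using NN2 by (simp add: algebra_simps)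
  also have "\<dots> \<le> 0"
  proof -
    have "0 \<le> L * NN" using Lp NN_pos by simp
    moreover have "L * NN - (\<integral>x. D x * W x \<partial>lborel) \<le> 0" using ge by (simp add: mult.commute)
    ultimately show ?thesis by (simp add: mult_nonneg_nonpos)
  qed
  finally have "(\<integral>x. (L * W x - NN * D x)\<^sup>2 \<partial>lborel) \<le> 0" .
  moreover have "0 \<le> (\<integral>x. (L * W x - NN * D x)\<^sup>2 \<partial>lborel)" by simp
  ultimately have "(\<integral>x. (L * W x - NN * D x)\<^sup>2 \<partial>lborel) = 0" by simp
  then have "AE x in lborel. (L * W x - NN * D x)\<^sup>2 = 0"
    by (subst (asm) integral_nonneg_eq_0_iff_AE[OF Xi]) auto
  then show ?thesis
  proof (rule AE_mp, intro AE_I2 impI)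
    fix x assume "(L * W x - NN * D x)\<^sup>2 = 0"
    then have "L * W x = NN * D x" by simp
    then have "W x = NN / L * D x" using Lp by (simp add: field_simps)
    then show "W x = Top \<Phi>1 \<nu> W x" unfolding Top_is mu_def L_def by simp
  qed
qed

lemma imp_eq:
  assumes "AE x in lborel. W x = Top \<Phi>1 \<nu> W x"
  shows "Pfun \<Phi> \<Phi>1 \<nu> (Top \<Phi>1 \<nu> W) = Pfun \<Phi> \<Phi>1 \<nu> W"
proof -
  have [measurable]: "Top \<Phi>1 \<nu> W \<in> borel_measurable lborel"
    using good_sqi[OF TW_good] by (simp add: square_integrable_def)
  have "Aop m (Top \<Phi>1 \<nu> W) s = Aop m W s" for m s
    by (rule Aop_cong) (use assms in \<open>auto elim!: AE_mp\<close>)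
  then show ?thesis unfolding Pfun_def by simp
qed

lemma eta_summable: "summable (\<lambda>m. real (Suc m) * \<Phi>1 (Suc m) (\<nu> * real (Suc m)))"
proof (rule summable_comparison_test'[where N=0])
  show "summable (\<lambda>m. - (\<Phi>1 (Suc m) (\<nu> * real (Suc m) - sqrt (2 * K * real (Suc m))) * real (Suc m)))"
    by (rule summable_minus[OF s1])
  fix m :: nat
  have le: "\<Phi>1 (Suc m) (\<nu> * real (Suc m) - bb m) \<le> \<Phi>1 (Suc m) (\<nu> * real (Suc m))"
    by (rule phis.P1_mono[OF ph]) (use bb_lt[of m] bb_nonneg[of m] in auto)
  have np: "\<Phi>1 (Suc m) (\<nu> * real (Suc m)) \<le> 0" using sgn[of "Suc m" "\<nu> * real (Suc m)"] \<nu> by simp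
  have "norm (real (Suc m) * \<Phi>1 (Suc m) (\<nu> * real (Suc m))) = real (Suc m) * (- \<Phi>1 (Suc m) (\<nu> * real (Suc m)))"
    using np by (simp add: abs_mult)
  also have "\<dots> \<le> real (Suc m) * (- \<Phi>1 (Suc m) (\<nu> * real (Suc m) - bb m))"
    using le by (intro mult_left_mono) auto
  finally show "norm (real (Suc m) * \<Phi>1 (Suc m) (\<nu> * real (Suc m))) \<le> - (\<Phi>1 (Suc m) (\<nu> * real (Suc m) - sqrt (2 * K * real (Suc m))) * real (Suc m))"
    by (simp add: bb_def mult.commute)
qed

lemma third:
  assumes "AE x in lborel. W x = Top \<Phi>1 \<nu> W x"
  shows "AE x in lborel. (muW \<Phi>1 \<nu> W powr (-1/2))\<^sup>2 * W x =
          (\<Sum>m. Aop (Suc m) (\<lambda>s. - \<Phi>1 (Suc m) (\<nu> * real (Suc m) - Aop (Suc m) W s)) x)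
          + (\<Sum>m. real (Suc m) * \<Phi>1 (Suc m) (\<nu> * real (Suc m)))"
proof -
  have c2: "(muW \<Phi>1 \<nu> W powr (-1/2))\<^sup>2 = 1 / mu"
  proof -
    have "(mu powr (-1/2))\<^sup>2 = mu powr (-1/2) * mu powr (-1/2)" by (simp add: power2_eq_square)
    also have "\<dots> = mu powr (-1)" by (simp add: powr_add[symmetric])
    also have "\<dots> = 1 / mu" using mu_pos by (simp add: powr_minus_divide)
    finally show ?thesis by (simp add: mu_is)
  qed
  define X where "X k x = Aop (Suc k) (\<lambda>s. - \<Phi>1 (Suc k) (\<nu> * real (Suc k) - Aop (Suc k) W s)) x" for k x
  define Y where "Y k = real (Suc k) * \<Phi>1 (Suc k) (\<nu> * real (Suc k))" for k
  have UXY: "U k W x = X k x + Y k" for k x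
  proof -
    have si: "set_integrable lborel {x - real (Suc k)/2..x + real (Suc k)/2} (\<lambda>s. - \<Phi>1 (Suc k) (\<nu> * real (Suc k) - Aop (Suc k) W s))"
    proof -
      have g: "set_integrable lborel {x - real (Suc k)/2..x + real (Suc k)/2} (G k W)"
        by (rule sqi_loc_int[OF G_sqi(1)[OF W_good]])
      have c: "set_integrable lborel {x - real (Suc k)/2..x + real (Suc k)/2} (\<lambda>s. - \<Phi>1 (Suc k) (\<nu> * real (Suc k)))"
        by (auto simp: set_integrable_def integrable_indicator_iff emeasure_lborel_Icc_eq)
      have "set_integrable lborel {x - real (Suc k)/2..x + real (Suc k)/2} (\<lambda>s. G k W s + - \<Phi>1 (Suc k) (\<nu> * real (Suc k)))"
        by (rule set_integral_add(1)[OF g c])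
      moreover have "(\<lambda>s. G k W s + - \<Phi>1 (Suc k) (\<nu> * real (Suc k))) = (\<lambda>s. - \<Phi>1 (Suc k) (\<nu> * real (Suc k) - Aop (Suc k) W s))"
        by (simp add: fun_eq_iff G_def Psi'_def)
      ultimately show ?thesis by simp
    qed
    have "G k W = (\<lambda>s. - \<Phi>1 (Suc k) (\<nu> * real (Suc k) - Aop (Suc k) W s) + \<Phi>1 (Suc k) (\<nu> * real (Suc k)))"
      by (simp add: fun_eq_iff G_def Psi'_def)
    then have "U k W x = Aop (Suc k) (\<lambda>s. - \<Phi>1 (Suc k) (\<nu> * real (Suc k) - Aop (Suc k) W s) + \<Phi>1 (Suc k) (\<nu> * real (Suc k))) x"
      by (simp add: U_def)
    also have "\<dots> = X k x + Y k" unfolding X_def Y_def by (rule Aop_add_const[OF si])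
    finally show ?thesis .
  qed
  have sY: "summable Y" unfolding Y_def[abs_def] by (rule eta_summable)
  have sXY: "summable (\<lambda>k. X k x + Y k)" for x using U_summable(2)[OF W_good, of x] by (simp add: UXY)
  have sX: "summable (\<lambda>k. X k x)" for x using summable_diff[OF sXY[of x] sY] by simp
  have Dform: "D x = (\<Sum>k. X k x) + (\<Sum>k. Y k)" for x
    unfolding dP_eq UXY using suminf_add[OF sX[of x] sY] by simp
  show ?thesis using assms
  proof (rule AE_mp, intro AE_I2 impI)
    fix x assume "W x = Top \<Phi>1 \<nu> W x"
    then have "W x = mu * D x" by (simp add: Top_is)
    then have "1 / mu * W x = D x" using mu_pos by simp
    then show "(muW \<Phi>1 \<nu> W powr (-1/2))\<^sup>2 * W x =
          (\<Sum>m. Aop (Suc m) (\<lambda>s. - \<Phi>1 (Suc m) (\<nu> * real (Suc m) - Aop (Suc m) W s)) x)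
          + (\<Sum>m. real (Suc m) * \<Phi>1 (Suc m) (\<nu> * real (Suc m)))"
      unfolding c2 using Dform[of x] by (simp add: X_def Y_def)
  qed
qed

end


theorem lemma2p7:
  fixes \<Phi> \<Phi>1 \<Phi>2 \<Phi>3 \<Phi>4 :: "nat \<Rightarrow> real \<Rightarrow> real"
    and \<nu> K \<gamma> :: real and W :: "real \<Rightarrow> real"
  assumes \<nu>: "\<nu> > 0"
    and K: "0 < K" "K < \<nu>\<^sup>2 / 2"
    and d1: "\<And>m x. x \<ge> 0 \<Longrightarrow> (\<Phi> m has_real_derivative \<Phi>1 m x) (at x within {0..})"
    and d2: "\<And>m x. x \<ge> 0 \<Longrightarrow> (\<Phi>1 m has_real_derivative \<Phi>2 m x) (at x within {0..})"
    and d3: "\<And>m x. x \<ge> 0 \<Longrightarrow> (\<Phi>2 m has_real_derivative \<Phi>3 m x) (at x within {0..})"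
    and d4: "\<And>m x. x \<ge> 0 \<Longrightarrow> (\<Phi>3 m has_real_derivative \<Phi>4 m x) (at x within {0..})"
    and c4: "\<And>m. continuous_on {0..} (\<Phi>4 m)"
    and sgn: "\<And>m x. m \<ge> 1 \<Longrightarrow> x \<ge> 0 \<Longrightarrow>
               \<Phi> m x \<ge> 0 \<and> \<Phi>1 m x \<le> 0 \<and> \<Phi>2 m x \<ge> 0 \<and> \<Phi>3 m x \<le> 0 \<and> \<Phi>4 m x \<ge> 0"
    and strict: "\<And>x. x > 0 \<Longrightarrow>
               \<Phi> 1 x > 0 \<and> \<Phi>1 1 x < 0 \<and> \<Phi>2 1 x > 0 \<and> \<Phi>3 1 x < 0 \<and> \<Phi>4 1 x > 0"
    and \<gamma>: "5/2 < \<gamma>" "\<gamma> < 3"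
    and s1: "summable (\<lambda>m. \<Phi>1 (Suc m) (\<nu> * real (Suc m) - sqrt (2 * K * real (Suc m))) * real (Suc m))"
    and s2: "summable (\<lambda>m. \<Phi>2 (Suc m) (\<nu> * real (Suc m) - sqrt (2 * K * real (Suc m))) * (real (Suc m))\<^sup>2)"
    and s3: "summable (\<lambda>m. \<Phi>2 (Suc m) (\<nu> * real (Suc m)) * real (Suc m) powr \<gamma>)"
    and s4: "summable (\<lambda>m. \<Phi>3 (Suc m) (\<nu> * real (Suc m) - sqrt (2 * K * real (Suc m))) * real (Suc m) powr (3/2))"
    and W: "W \<in> CK K"
  shows "Pfun \<Phi> \<Phi>1 \<nu> (Top \<Phi>1 \<nu> W) \<ge> Pfun \<Phi> \<Phi>1 \<nu> W
    \<and> (Pfun \<Phi> \<Phi>1 \<nu> (Top \<Phi>1 \<nu> W) = Pfun \<Phi> \<Phi>1 \<nu> W \<longleftrightarrow> (AE x in lborel. W x = Top \<Phi>1 \<nu> W x))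
    \<and> ((AE x in lborel. W x = Top \<Phi>1 \<nu> W x) \<longrightarrow>
           summable (\<lambda>m. real (Suc m) * \<Phi>1 (Suc m) (\<nu> * real (Suc m))) \<and>
           (let c = muW \<Phi>1 \<nu> W powr (-1/2);
                \<eta> = (\<Sum>m. real (Suc m) * \<Phi>1 (Suc m) (\<nu> * real (Suc m)))
            in AE x in lborel. c\<^sup>2 * W x =
                 (\<Sum>m. Aop (Suc m) (\<lambda>s. - \<Phi>1 (Suc m) (\<nu> * real (Suc m) - Aop (Suc m) W s)) x) + \<eta>))"
proof -
  interpret S \<Phi> \<Phi>1 \<Phi>2 \<Phi>3 \<nu> K W
  proof
    show "\<nu> > 0" by (rule \<nu>)
    show "0 < K" by (rule K(1))
    show "K < \<nu>\<^sup>2 / 2" by (rule K(2))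
    show "\<And>m x. x > 0 \<Longrightarrow> (\<Phi> m has_real_derivative \<Phi>1 m x) (at x)"
      by (rule deriv_at_of_within[OF d1])
    show "\<And>m x. x > 0 \<Longrightarrow> (\<Phi>1 m has_real_derivative \<Phi>2 m x) (at x)"
      by (rule deriv_at_of_within[OF d2])
    show "\<And>m x. x > 0 \<Longrightarrow> (\<Phi>2 m has_real_derivative \<Phi>3 m x) (at x)"
      by (rule deriv_at_of_within[OF d3])
    show "\<And>m x. m \<ge> 1 \<Longrightarrow> x \<ge> 0 \<Longrightarrow> \<Phi>1 m x \<le> 0 \<and> \<Phi>2 m x \<ge> 0 \<and> \<Phi>3 m x \<le> 0"
      using sgn by blast
    show "\<And>x. x > 0 \<Longrightarrow> \<Phi>2 1 x > 0" using strict by blast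
    show "summable (\<lambda>m. \<Phi>1 (Suc m) (\<nu> * real (Suc m) - sqrt (2 * K * real (Suc m))) * real (Suc m))" by (rule s1)
    show "summable (\<lambda>m. \<Phi>2 (Suc m) (\<nu> * real (Suc m) - sqrt (2 * K * real (Suc m))) * (real (Suc m))\<^sup>2)" by (rule s2)
    show "W \<in> CK K" by (rule W)
  qed
  show ?thesis
  proof (intro conjI impI)
    show "Pfun \<Phi> \<Phi>1 \<nu> W \<le> Pfun \<Phi> \<Phi>1 \<nu> (Top \<Phi>1 \<nu> W)" by (rule ineq)
    show "Pfun \<Phi> \<Phi>1 \<nu> (Top \<Phi>1 \<nu> W) = Pfun \<Phi> \<Phi>1 \<nu> W \<longleftrightarrow> (AE x in lborel. W x = Top \<Phi>1 \<nu> W x)"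
      using eq_imp imp_eq by blast
  next
    assume ae: "AE x in lborel. W x = Top \<Phi>1 \<nu> W x"
    show "summable (\<lambda>m. real (Suc m) * \<Phi>1 (Suc m) (\<nu> * real (Suc m)))" by (rule eta_summable)
    show "let c = muW \<Phi>1 \<nu> W powr (-1/2);
                \<eta> = (\<Sum>m. real (Suc m) * \<Phi>1 (Suc m) (\<nu> * real (Suc m)))
            in AE x in lborel. c\<^sup>2 * W x =
                 (\<Sum>m. Aop (Suc m) (\<lambda>s. - \<Phi>1 (Suc m) (\<nu> * real (Suc m) - Aop (Suc m) W s)) x) + \<eta>"
      unfolding Let_def by (rule third[OF ae])
  qed
qed

end
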